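(* Let $M,N$ be indecomposable non-projective $A_n^\ell$-modules. If $\underline{\mathrm{Hom}}(M,N)=0$ and $\underline{\mathrm{Hom}}(N,M)=0$, then $\mathrm{top}(M)\not\cong\mathrm{top}(N)$ and $\mathrm{soc}(M)\not\cong\mathrm{soc}(N)$.
   Context: $A_n^\ell=kQ/I$ ($k$ algebraically closed), $Q$ the cyclic quiver with vertices $1,\dots,n$ and arrows $i\to i+1$, $n\to 1$, $I$ generated by all paths of length $\ell+1$. $\underline{\mathrm{Hom}}$ denotes Hom modulo morphisms factoring through projective modules. *)

theory Defs
  imports "Jordan_Normal_Form.DL_Rank" "HOL-Computational_Algebra.Polynomial"
begin

text \<open>Finite-dimensional modules over A_n^l = kQ/I are represented as
  representations of the cyclic quiver with vertices 0..n-1 (arrows i -> (i+1) mod n)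
  bound by the relations: every path of length l+1 acts as zero.
  A representation is a pair (d, A): d i = dimension of the vector space k^(d i) at vertex i,
  A i = matrix of the arrow i -> (i+1) mod n, of size d((i+1) mod n) x d i.\<close>

type_synonym 'k rep = "(nat \<Rightarrow> nat) \<times> (nat \<Rightarrow> 'k mat)"

abbreviation dimv :: "'k rep \<Rightarrow> nat \<Rightarrow> nat" where "dimv M \<equiv> fst M"
abbreviation arr :: "'k rep \<Rightarrow> nat \<Rightarrow> 'k mat" where "arr M \<equiv> snd M"

definition nxt :: "nat \<Rightarrow> nat \<Rightarrow> nat" where "nxt n i = Suc i mod n"
definition prv :: "nat \<Rightarrow> nat \<Rightarrow> nat" where "prv n i = (i + n - 1) mod n"

fun pathmat :: "nat \<Rightarrow> 'k::field rep \<Rightarrow> nat \<Rightarrow> nat \<Rightarrow> 'k mat" where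
  "pathmat n M i 0 = 1\<^sub>m (dimv M i)"
| "pathmat n M i (Suc m) = arr M ((i + m) mod n) * pathmat n M i m"

definition is_rep :: "nat \<Rightarrow> nat \<Rightarrow> 'k::field rep \<Rightarrow> bool" where
  "is_rep n l M \<longleftrightarrow>
     (\<forall>i<n. arr M i \<in> carrier_mat (dimv M (nxt n i)) (dimv M i)) \<and>
     (\<forall>i<n. pathmat n M i (Suc l) = 0\<^sub>m (dimv M ((i + Suc l) mod n)) (dimv M i))"

definition is_hom :: "nat \<Rightarrow> 'k::field rep \<Rightarrow> 'k rep \<Rightarrow> (nat \<Rightarrow> 'k mat) \<Rightarrow> bool" where
  "is_hom n M N f \<longleftrightarrow>
     (\<forall>i<n. f i \<in> carrier_mat (dimv N i) (dimv M i)) \<and>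
     (\<forall>i<n. arr N i * f i = f (nxt n i) * arr M i)"

definition is_surj_hom :: "nat \<Rightarrow> 'k::field rep \<Rightarrow> 'k rep \<Rightarrow> (nat \<Rightarrow> 'k mat) \<Rightarrow> bool" where
  "is_surj_hom n M N f \<longleftrightarrow> is_hom n M N f \<and>
     (\<forall>i<n. \<forall>v \<in> carrier_vec (dimv N i). \<exists>w \<in> carrier_vec (dimv M i). f i *\<^sub>v w = v)"

definition is_projective :: "nat \<Rightarrow> nat \<Rightarrow> 'k::field rep \<Rightarrow> bool" where
  "is_projective n l P \<longleftrightarrow> is_rep n l P \<and>
     (\<forall>X Y g h. is_rep n l X \<and> is_rep n l Y \<and> is_surj_hom n X Y g \<and> is_hom n P Y h \<longrightarrow>
        (\<exists>h'. is_hom n P X h' \<and> (\<forall>i<n. g i * h' i = h i)))"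

definition factors_through_projective :: "nat \<Rightarrow> nat \<Rightarrow> 'k::field rep \<Rightarrow> 'k rep \<Rightarrow> (nat \<Rightarrow> 'k mat) \<Rightarrow> bool" where
  "factors_through_projective n l M N f \<longleftrightarrow>
     (\<exists>P a b. is_projective n l P \<and> is_hom n M P a \<and> is_hom n P N b \<and> (\<forall>i<n. f i = b i * a i))"

definition stable_hom_zero :: "nat \<Rightarrow> nat \<Rightarrow> 'k::field rep \<Rightarrow> 'k rep \<Rightarrow> bool" where
  "stable_hom_zero n l M N \<longleftrightarrow> (\<forall>f. is_hom n M N f \<longrightarrow> factors_through_projective n l M N f)"

definition rep_iso :: "nat \<Rightarrow> 'k::field rep \<Rightarrow> 'k rep \<Rightarrow> bool" where
  "rep_iso n M N \<longleftrightarrow> (\<exists>f g. is_hom n M N f \<and> is_hom n N M g \<and>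
     (\<forall>i<n. g i * f i = 1\<^sub>m (dimv M i) \<and> f i * g i = 1\<^sub>m (dimv N i)))"

definition dsum :: "nat \<Rightarrow> 'k::field rep \<Rightarrow> 'k rep \<Rightarrow> 'k rep" where
  "dsum n X Y = (\<lambda>i. dimv X i + dimv Y i,
     \<lambda>i. four_block_mat (arr X i) (0\<^sub>m (dimv X (nxt n i)) (dimv Y i))
                         (0\<^sub>m (dimv Y (nxt n i)) (dimv X i)) (arr Y i))"

definition nonzero_rep :: "nat \<Rightarrow> 'k rep \<Rightarrow> bool" where
  "nonzero_rep n M \<longleftrightarrow> (\<exists>i<n. 0 < dimv M i)"

definition indecomposable :: "nat \<Rightarrow> nat \<Rightarrow> 'k::field rep \<Rightarrow> bool" where
  "indecomposable n l M \<longleftrightarrow> is_rep n l M \<and> nonzero_rep n M \<and>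
     \<not> (\<exists>X Y. is_rep n l X \<and> is_rep n l Y \<and> nonzero_rep n X \<and> nonzero_rep n Y \<and>
            rep_iso n M (dsum n X Y))"

text \<open>top(M) = M / rad M, where (rad M)_i is the image of the arrow ending at i;
  it is semisimple: all arrows act by zero.\<close>
definition top_rep :: "nat \<Rightarrow> 'k::field rep \<Rightarrow> 'k rep" where
  "top_rep n M = (let t = (\<lambda>i. dimv M i - vec_space.rank (dimv M i) (arr M (prv n i)))
                  in (t, \<lambda>i. 0\<^sub>m (t (nxt n i)) (t i)))"

text \<open>soc(M): at vertex i, the kernel of the (unique) arrow starting at i;
  semisimple: all arrows act by zero.\<close>
definition soc_rep :: "nat \<Rightarrow> 'k::field rep \<Rightarrow> 'k rep" where
  "soc_rep n M = (let s = (\<lambda>i. dimv M i - vec_space.rank (dimv M (nxt n i)) (arr M i))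
                  in (s, \<lambda>i. 0\<^sub>m (s (nxt n i)) (s i)))"

end

theory Submission
  imports Defs
begin

lemma nxt_mod: "1 \<le> n \<Longrightarrow> nxt n ((j + m) mod n) = (j + Suc m) mod n"
  unfolding nxt_def by (simp add: mod_Suc_eq)

lemma nxt_lt: "1 \<le> n \<Longrightarrow> nxt n j < n"
  unfolding nxt_def by simp

lemma rep_arr: "is_rep n l M \<Longrightarrow> i < n \<Longrightarrow> arr M i \<in> carrier_mat (dimv M (nxt n i)) (dimv M i)"
  unfolding is_rep_def by auto

lemma pathmat_carrier:
  assumes "is_rep n l M" "1 \<le> n" "j < n"
  shows "pathmat n M j m \<in> carrier_mat (dimv M ((j+m) mod n)) (dimv M j)"
proof (induction m)
  case 0 then show ?case using assms by simp
next
  case (Suc m)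
  have "arr M ((j+m) mod n) \<in> carrier_mat (dimv M ((j + Suc m) mod n)) (dimv M ((j+m) mod n))"
    using rep_arr[OF assms(1), of "(j+m) mod n"] assms nxt_mod[of n j m] by auto
  then show ?case using Suc by simp
qed

lemma pathmat_add:
  assumes "is_rep n l M" "1 \<le> n" "j < n"
  shows "pathmat n M j (m + k) = pathmat n M ((j+m) mod n) k * pathmat n M j m"
proof (induction k)
  case 0
  then show ?case using pathmat_carrier[OF assms, of m] by simp
next
  case (Suc k)
  have jm: "(j+m) mod n < n" using assms by simp
  have c1: "pathmat n M j m \<in> carrier_mat (dimv M ((j+m) mod n)) (dimv M j)"
    using pathmat_carrier[OF assms] by simp
  have c2: "pathmat n M ((j+m) mod n) k \<in> carrier_mat (dimv M (((j+m) mod n + k) mod n)) (dimv M ((j+m) mod n))"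
    using pathmat_carrier[OF assms(1,2) jm] by simp
  have idx: "((j+m) mod n + k) mod n = (j + (m+k)) mod n" by (simp add: mod_add_left_eq add.assoc)
  have c3: "arr M ((j + (m+k)) mod n) \<in> carrier_mat (dimv M (nxt n ((j + (m+k)) mod n))) (dimv M ((j + (m+k)) mod n))"
    using rep_arr[OF assms(1)] assms by simp
  have "pathmat n M j (m + Suc k) = arr M ((j + (m+k)) mod n) * pathmat n M j (m + k)" by simp
  also have "\<dots> = arr M ((j + (m+k)) mod n) * (pathmat n M ((j+m) mod n) k * pathmat n M j m)" using Suc by simp
  also have "\<dots> = (arr M ((j + (m+k)) mod n) * pathmat n M ((j+m) mod n) k) * pathmat n M j m"
    using c1 c2 c3 idx by (metis assoc_mult_mat)
  also have "\<dots> = pathmat n M ((j+m) mod n) (Suc k) * pathmat n M j m" using idx by simp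
  finally show ?case .
qed

lemma pathmat_zero:
  assumes "is_rep n l M" "1 \<le> n" "j < n" "Suc l \<le> m"
  shows "pathmat n M j m = 0\<^sub>m (dimv M ((j+m) mod n)) (dimv M j)"
proof -
  obtain k where m: "m = Suc l + k" using assms(4) le_Suc_ex by blast
  have z: "pathmat n M j (Suc l) = 0\<^sub>m (dimv M ((j + Suc l) mod n)) (dimv M j)"
    using assms unfolding is_rep_def by blast
  have jm: "(j + Suc l) mod n < n" using assms by simp
  have c2: "pathmat n M ((j+Suc l) mod n) k \<in> carrier_mat (dimv M (((j+Suc l) mod n + k) mod n)) (dimv M ((j+Suc l) mod n))"
    using pathmat_carrier[OF assms(1,2) jm] by simp
  have idx: "((j+Suc l) mod n + k) mod n = (j + m) mod n" using m by (simp add: mod_add_left_eq add.assoc)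
  show ?thesis unfolding m pathmat_add[OF assms(1-3)] z using c2 idx m by simp
qed

lemma hom_path:
  assumes "is_rep n l M" "is_rep n l N" "is_hom n M N f" "1 \<le> n" "j < n"
  shows "f ((j+m) mod n) * pathmat n M j m = pathmat n N j m * f j"
proof (induction m)
  case 0
  have "f j \<in> carrier_mat (dimv N j) (dimv M j)" using assms unfolding is_hom_def by auto
  then show ?case using assms by simp
next
  case (Suc m)
  let ?q = "(j+m) mod n"
  have q: "?q < n" using assms by simp
  have cM: "pathmat n M j m \<in> carrier_mat (dimv M ?q) (dimv M j)" using pathmat_carrier[OF assms(1,4,5)] by simp
  have cN: "pathmat n N j m \<in> carrier_mat (dimv N ?q) (dimv N j)" using pathmat_carrier[OF assms(2,4,5)] by simp
  have aM: "arr M ?q \<in> carrier_mat (dimv M (nxt n ?q)) (dimv M ?q)" using rep_arr[OF assms(1) q] .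
  have aN: "arr N ?q \<in> carrier_mat (dimv N (nxt n ?q)) (dimv N ?q)" using rep_arr[OF assms(2) q] .
  have fq: "f ?q \<in> carrier_mat (dimv N ?q) (dimv M ?q)" using assms q unfolding is_hom_def by auto
  have fq': "f (nxt n ?q) \<in> carrier_mat (dimv N (nxt n ?q)) (dimv M (nxt n ?q))" using assms nxt_lt unfolding is_hom_def by auto
  have fj: "f j \<in> carrier_mat (dimv N j) (dimv M j)" using assms unfolding is_hom_def by auto
  have comm: "arr N ?q * f ?q = f (nxt n ?q) * arr M ?q" using assms q unfolding is_hom_def by auto
  have idx: "nxt n ?q = (j + Suc m) mod n" using nxt_mod assms by simp
  have "f ((j + Suc m) mod n) * pathmat n M j (Suc m) = f (nxt n ?q) * (arr M ?q * pathmat n M j m)"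
    using idx by simp
  also have "\<dots> = (f (nxt n ?q) * arr M ?q) * pathmat n M j m" using fq' aM cM by (metis assoc_mult_mat)
  also have "\<dots> = (arr N ?q * f ?q) * pathmat n M j m" using comm by simp
  also have "\<dots> = arr N ?q * (f ?q * pathmat n M j m)" using aN fq cM by (metis assoc_mult_mat)
  also have "\<dots> = arr N ?q * (pathmat n N j m * f j)" using Suc by simp
  also have "\<dots> = (arr N ?q * pathmat n N j m) * f j" using aN cN fj by (metis assoc_mult_mat)
  also have "\<dots> = pathmat n N j (Suc m) * f j" by simp
  finally show ?case .
qed


lemma zero_mat_mult_vec[simp]: "v \<in> carrier_vec b \<Longrightarrow> 0\<^sub>m a b *\<^sub>v v = 0\<^sub>v a"
  by (intro eq_vecI) (auto simp: mult_mat_vec_def)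

lemma mat_mult_zero_vec[simp]: "A \<in> carrier_mat a b \<Longrightarrow> A *\<^sub>v 0\<^sub>v b = 0\<^sub>v a"
  by (intro eq_vecI) (auto simp: mult_mat_vec_def intro!: scalar_prod_right_zero)

lemma act_carrier:
  assumes "is_rep n l M" "1 \<le> n" "j < n" "z \<in> carrier_vec (dimv M j)"
  shows "pathmat n M j m *\<^sub>v z \<in> carrier_vec (dimv M ((j+m) mod n))"
  by (rule mult_mat_vec_carrier[OF pathmat_carrier[OF assms(1-3)] assms(4)])

lemma act_comp:
  assumes "is_rep n l M" "1 \<le> n" "j < n" "z \<in> carrier_vec (dimv M j)" "w = (j+m) mod n"
  shows "pathmat n M w s *\<^sub>v (pathmat n M j m *\<^sub>v z) = pathmat n M j (m+s) *\<^sub>v z"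
proof -
  have w: "w < n" using assms by simp
  show ?thesis
    unfolding pathmat_add[OF assms(1-3), of m s] assms(5)[symmetric]
    using pathmat_carrier[OF assms(1-3), of m] pathmat_carrier[OF assms(1,2) w, of s] assms(4,5)
    by (metis assoc_mult_mat_vec)
qed

definition maxlen :: "nat \<Rightarrow> 'k::field rep \<Rightarrow> nat \<Rightarrow> bool" where
  "maxlen n M b \<longleftrightarrow> (\<forall>j<n. pathmat n M j b = 0\<^sub>m (dimv M ((j+b) mod n)) (dimv M j))"

lemma act_high:
  assumes "is_rep n l M" "1 \<le> n" "j < n" "z \<in> carrier_vec (dimv M j)" "maxlen n M b" "b \<le> m"
  shows "pathmat n M j m *\<^sub>v z = 0\<^sub>v (dimv M ((j+m) mod n))"
proof -
  obtain k where m: "m = b + k" using assms(6) le_Suc_ex le_iff_add by blast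
  have jb: "(j+b) mod n < n" using assms by simp
  have z: "pathmat n M j b = 0\<^sub>m (dimv M ((j+b) mod n)) (dimv M j)" using assms(3,5) unfolding maxlen_def by blast
  have c2: "pathmat n M ((j+b) mod n) k \<in> carrier_mat (dimv M (((j+b) mod n + k) mod n)) (dimv M ((j+b) mod n))"
    using pathmat_carrier[OF assms(1,2) jb] by simp
  have idx: "((j+b) mod n + k) mod n = (j + m) mod n" using m by (simp add: mod_add_left_eq add.assoc)
  have "pathmat n M j m = 0\<^sub>m (dimv M ((j+m) mod n)) (dimv M j)"
    unfolding m pathmat_add[OF assms(1-3)] z using c2 idx m by simp
  then show ?thesis using assms(4) by simp
qed

lemma nonzero_mat_vec:
  fixes A :: "'a::field mat"
  assumes "A \<in> carrier_mat a b" "A \<noteq> 0\<^sub>m a b"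
  shows "\<exists>y \<in> carrier_vec b. A *\<^sub>v y \<noteq> 0\<^sub>v a"
proof (rule ccontr)
  assume "\<not> ?thesis"
  then have h: "\<And>y. y \<in> carrier_vec b \<Longrightarrow> A *\<^sub>v y = 0\<^sub>v a" by blast
  have "A = 0\<^sub>m a b"
  proof (rule eq_matI)
    fix r c assume rc: "r < dim_row (0\<^sub>m a b)" "c < dim_col (0\<^sub>m a b)"
    have "(A *\<^sub>v unit_vec b c) $ r = 0" using h[of "unit_vec b c"] rc by simp
    moreover have "(A *\<^sub>v unit_vec b c) $ r = A $$ (r, c)"
      using rc assms(1) by (simp add: scalar_prod_right_unit)
    ultimately show "A $$ (r, c) = 0\<^sub>m a b $$ (r, c)" using rc by simp
  qed (use assms in auto)
  then show False using assms by simp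
qed

lemma maxlen_exists:
  fixes M :: "'k::field rep"
  assumes "is_rep n l M" "1 \<le> n" "nonzero_rep n M"
  shows "\<exists>t i y. i < n \<and> y \<in> carrier_vec (dimv M i) \<and>
     pathmat n M i t *\<^sub>v y \<noteq> 0\<^sub>v (dimv M ((i+t) mod n)) \<and> maxlen n M (Suc t)"
proof -
  define S where "S = {t. \<exists>j<n. pathmat n M j t \<noteq> 0\<^sub>m (dimv M ((j+t) mod n)) (dimv M j)}"
  obtain j0 where j0: "j0 < n" "0 < dimv M j0" using assms(3) unfolding nonzero_rep_def by auto
  have ne: "(1\<^sub>m (dimv M j0) :: 'k mat) \<noteq> 0\<^sub>m (dimv M j0) (dimv M j0)"
  proof
    assume eq: "(1\<^sub>m (dimv M j0) :: 'k mat) = 0\<^sub>m (dimv M j0) (dimv M j0)"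
    have "(1\<^sub>m (dimv M j0) :: 'k mat) $$ (0,0) = 0\<^sub>m (dimv M j0) (dimv M j0) $$ (0,0)" using eq by simp
    then show False using j0 by simp
  qed
  then have "0 \<in> S" unfolding S_def using j0 by (auto intro!: exI[of _ j0])
  have bnd: "S \<subseteq> {..l}"
  proof
    fix t assume "t \<in> S"
    then obtain j where "j < n" "pathmat n M j t \<noteq> 0\<^sub>m (dimv M ((j+t) mod n)) (dimv M j)" unfolding S_def by auto
    then show "t \<in> {..l}" using pathmat_zero[OF assms(1,2) \<open>j<n\<close>, of t] by (cases "Suc l \<le> t") auto
  qed
  have fin: "finite S" using bnd finite_subset by blast
  define t where "t = Max S"
  have tS: "t \<in> S" unfolding t_def using fin \<open>0 \<in> S\<close> by (intro Max_in) auto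
  have "Suc t \<notin> S" using fin t_def by (metis Max_ge Suc_n_not_le_n)
  then have ml: "maxlen n M (Suc t)" unfolding S_def maxlen_def by auto
  from tS obtain i where i: "i < n" "pathmat n M i t \<noteq> 0\<^sub>m (dimv M ((i+t) mod n)) (dimv M i)" unfolding S_def by auto
  then obtain y where "y \<in> carrier_vec (dimv M i)" "pathmat n M i t *\<^sub>v y \<noteq> 0\<^sub>v (dimv M ((i+t) mod n))"
    using nonzero_mat_vec[OF pathmat_carrier[OF assms(1,2) i(1)]] by blast
  then show ?thesis using i ml by blast
qed

lemma mod_sub_mult:
  fixes i t s n :: nat
  assumes "s * n \<le> t"
  shows "(i + (t - s * n)) mod n = (i + t) mod n"
proof -
  have "i + t = (i + (t - s*n)) + s * n" using assms by linarith
  then show ?thesis by (metis mod_mult_self1)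
qed

lemma functional_exists:
  assumes rep: "is_rep n l M" and n: "1 \<le> n" and i: "i < n" and y: "y \<in> carrier_vec (dimv M i)"
    and nz: "pathmat n M i t *\<^sub>v y \<noteq> 0\<^sub>v (dimv M ((i+t) mod n))" and ml: "maxlen n M (Suc t)"
  shows "\<exists>q \<in> carrier_vec (dimv M ((i+t) mod n)). q \<bullet> (pathmat n M i t *\<^sub>v y) = 1 \<and>
     (\<forall>s. 1 \<le> s \<and> s * n \<le> t \<longrightarrow> q \<bullet> (pathmat n M i (t - s*n) *\<^sub>v y) = 0)"
proof -
  define v where "v = (i+t) mod n"
  have v: "v < n" unfolding v_def using n by simp
  define w where "w = (\<lambda>m. pathmat n M i m *\<^sub>v y)"
  have wc: "\<And>s. s * n \<le> t \<Longrightarrow> w (t - s*n) \<in> carrier_vec (dimv M v)"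
    unfolding w_def v_def using act_carrier[OF rep n i y] mod_sub_mult by metis
  have w0c: "w t \<in> carrier_vec (dimv M v)" using wc[of 0] by simp
  have hi: "\<And>m. Suc t \<le> m \<Longrightarrow> w m = 0\<^sub>v (dimv M ((i+m) mod n))"
    unfolding w_def using act_high[OF rep n i y ml] by blast
  have P: "\<exists>q \<in> carrier_vec (dimv M v). q \<bullet> w t = 1 \<and>
     (\<forall>s. 1 \<le> s \<and> s \<le> T \<and> s * n \<le> t \<longrightarrow> q \<bullet> w (t - s*n) = 0)" for T
  proof (induction T)
    case 0
    have "w t \<noteq> 0\<^sub>v (dimv M v)" using nz unfolding w_def v_def .
    then obtain r where r: "r < dimv M v" "w t $ r \<noteq> 0" using w0c by (metis carrier_vecD eq_vecI index_zero_vec)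
    define q where "q = (1 / (w t $ r)) \<cdot>\<^sub>v unit_vec (dimv M v) r"
    have "q \<bullet> w t = (1 / (w t $ r)) * (unit_vec (dimv M v) r \<bullet> w t)"
      unfolding q_def using w0c by (intro smult_scalar_prod_distrib) auto
    also have "\<dots> = 1" using r w0c by (simp add: scalar_prod_left_unit)
    finally show ?case unfolding q_def by (intro bexI[of _ q]) (auto simp: q_def)
  next
    case (Suc T)
    then obtain q where q: "q \<in> carrier_vec (dimv M v)" "q \<bullet> w t = 1"
      "\<And>s. 1 \<le> s \<Longrightarrow> s \<le> T \<Longrightarrow> s * n \<le> t \<Longrightarrow> q \<bullet> w (t - s*n) = 0" by blast
    show ?case
    proof (cases "Suc T * n \<le> t")
      case False
      then show ?thesis using q
        by (metis le_Suc_eq)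
    next
      case True
      define R where "R = pathmat n M v (Suc T * n)"
      have vv: "(v + Suc T * n) mod n = v" using v by (metis mod_mult_self1 mod_less)
      have R: "R \<in> carrier_mat (dimv M v) (dimv M v)" unfolding R_def using pathmat_carrier[OF rep n v, of "Suc T * n"] vv by simp
      define p where "p = transpose_mat R *\<^sub>v q"
      have p: "p \<in> carrier_vec (dimv M v)" unfolding p_def using R q by auto
      have pw: "p \<bullet> w m = q \<bullet> w (m + Suc T * n)" if "(i + m) mod n = v" for m
      proof -
        have "w m \<in> carrier_vec (dimv M v)" unfolding w_def using act_carrier[OF rep n i y] that by metis
        then have "p \<bullet> w m = q \<bullet> (R *\<^sub>v w m)" unfolding p_def using R q by (simp add: transpose_vec_mult_scalar)
        also have "R *\<^sub>v w m = w (m + Suc T * n)" unfolding R_def w_def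
          using act_comp[OF rep n i y that[symmetric]] by simp
        finally show ?thesis .
      qed
      define c where "c = q \<bullet> w (t - Suc T * n)"
      define q' where "q' = q - c \<cdot>\<^sub>v p"
      have q'c: "q' \<in> carrier_vec (dimv M v)" unfolding q'_def using q p by auto
      have q'w: "q' \<bullet> w m = q \<bullet> w m - c * (p \<bullet> w m)" if "(i + m) mod n = v" for m
      proof -
        have "w m \<in> carrier_vec (dimv M v)" unfolding w_def using act_carrier[OF rep n i y] that by metis
        then show ?thesis unfolding q'_def using q p
          by (simp add: minus_scalar_prod_distrib smult_scalar_prod_distrib)
      qed
      have vt: "(i + t) mod n = v" unfolding v_def by simp
      have vs: "(i + (t - s*n)) mod n = v" if "s * n \<le> t" for s using mod_sub_mult[OF that] v_def by simp
      have "q' \<bullet> w t = 1"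
      proof -
        have big: "Suc t \<le> t + Suc T * n" using n by simp
        have idx: "(i + (t + Suc T * n)) mod n = v" using vt by (metis add.assoc mod_mult_self1)
        have "p \<bullet> w t = q \<bullet> w (t + Suc T * n)" using pw[OF vt] .
        also have "\<dots> = 0" using hi[OF big] idx q(1) by (simp add: scalar_prod_right_zero)
        finally have "p \<bullet> w t = 0" .
        then show ?thesis using q'w[OF vt] q by simp
      qed
      moreover have "q' \<bullet> w (t - s*n) = 0" if s: "1 \<le> s" "s \<le> Suc T" "s * n \<le> t" for s
      proof (cases "s = Suc T")
        case True
        have "p \<bullet> w (t - s*n) = q \<bullet> w t" using pw[OF vs[OF s(3)]] True s(3) by simp
        then show ?thesis using q'w[OF vs[OF s(3)]] q True c_def by simp
      next
        case False
        then have sT: "s \<le> T" using s by simp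
        have big: "Suc t \<le> t - s*n + Suc T * n"
        proof -
          have "s * n \<le> T * n" using sT by simp
          then have "s * n < Suc T * n" unfolding mult_Suc using n by linarith
          then show ?thesis using s(3) by linarith
        qed
        have idx: "(i + (t - s*n + Suc T * n)) mod n = v"
          using vs[OF s(3)] by (metis add.assoc mod_mult_self1)
        have "p \<bullet> w (t - s*n) = 0" using pw[OF vs[OF s(3)]] hi[OF big] q(1) idx
          by (simp add: scalar_prod_right_zero)
        then show ?thesis using q'w[OF vs[OF s(3)]] q(3)[OF s(1) sT s(3)] by simp
      qed
      ultimately show ?thesis using q'c by blast
    qed
  qed
  obtain q where q: "q \<in> carrier_vec (dimv M v)" "q \<bullet> w t = 1"
      "\<And>s. 1 \<le> s \<Longrightarrow> s \<le> t \<Longrightarrow> s * n \<le> t \<Longrightarrow> q \<bullet> w (t - s*n) = 0" using P[of t] by blast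
  have "\<And>s. 1 \<le> s \<Longrightarrow> s * n \<le> t \<Longrightarrow> s \<le> t" using n by (metis le_trans mult_le_mono2 nat_mult_1_right)
  then show ?thesis using q unfolding w_def v_def by blast
qed


lemma mod_cancel_lt: fixes a b i n :: nat assumes "a < n" "b < n" "(i + a) mod n = (i + b) mod n" shows "a = b"
proof -
  have "(int i + int a) mod int n = (int i + int b) mod int n"
    using assms(3) by (metis of_nat_add of_nat_mod)
  then have "((int i + int a) - int i) mod int n = ((int i + int b) - int i) mod int n"
    by (rule mod_diff_cong) simp
  then have "int a mod int n = int b mod int n" by simp
  then show ?thesis using assms(1,2) by (metis of_nat_mod mod_less of_nat_eq_iff)
qed

definition rr :: "nat \<Rightarrow> nat \<Rightarrow> nat \<Rightarrow> nat" where "rr n i j = (j + n - i) mod n"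
definition exv :: "nat \<Rightarrow> nat \<Rightarrow> nat \<Rightarrow> nat \<Rightarrow> nat" where "exv n i j k = rr n i j + k * n"
definition cnt :: "nat \<Rightarrow> nat \<Rightarrow> nat \<Rightarrow> nat \<Rightarrow> nat" where
  "cnt n i a j = (if rr n i j < a then (a - 1 - rr n i j) div n + 1 else 0)"
definition dl :: "nat \<Rightarrow> nat \<Rightarrow> nat \<Rightarrow> nat" where "dl n i j = (if nxt n j = i then 1 else 0)"

lemma rr_lt: "1 \<le> n \<Longrightarrow> rr n i j < n" unfolding rr_def by simp

lemma rr_mod: assumes "1 \<le> n" "i < n" "j < n" shows "(i + rr n i j) mod n = j"
proof -
  have "(i + rr n i j) mod n = (i + (j + n - i)) mod n" unfolding rr_def by (simp add: mod_add_right_eq)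
  also have "i + (j + n - i) = j + n" using assms by simp
  finally show ?thesis using assms by simp
qed

lemma rr_unique: assumes "1 \<le> n" "i < n" "j < n" "r < n" "(i + r) mod n = j" shows "r = rr n i j"
  using mod_cancel_lt[of r n "rr n i j" i] rr_mod[OF assms(1-3)] rr_lt[OF assms(1)] assms by simp

lemma exv_mod: assumes "1 \<le> n" "i < n" "j < n" shows "(i + exv n i j k) mod n = j"
  using rr_mod[OF assms] unfolding exv_def by (metis add.assoc mod_mult_self1)

lemma exv_cong: assumes "1 \<le> n" "i < n" "j < n" "(i + m) mod n = j" shows "m = exv n i j (m div n)"
proof -
  have "(i + m mod n) mod n = j" using assms(4) by (simp add: mod_add_right_eq)
  then have "m mod n = rr n i j" using rr_unique[OF assms(1-3)] assms(1) by simp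
  then show ?thesis unfolding exv_def using mod_div_mult_eq[of m n] by simp
qed

lemma exv_inj: "1 \<le> n \<Longrightarrow> exv n i j k = exv n i j k' \<longleftrightarrow> k = k'"
  unfolding exv_def by simp

lemma rr_self: "1 \<le> n \<Longrightarrow> i < n \<Longrightarrow> rr n i i = 0" unfolding rr_def by simp

lemma exv_self: "1 \<le> n \<Longrightarrow> i < n \<Longrightarrow> exv n i i k = k * n" unfolding exv_def by (simp add: rr_self)

lemma cnt_iff: assumes "1 \<le> n" shows "k < cnt n i a j \<longleftrightarrow> exv n i j k < a"
proof (cases "rr n i j < a")
  case True
  have "k < (a - 1 - rr n i j) div n + 1 \<longleftrightarrow> k \<le> (a - 1 - rr n i j) div n" by (simp add: less_Suc_eq_le)
  also have "\<dots> \<longleftrightarrow> k * n \<le> a - 1 - rr n i j" using assms by (simp add: less_eq_div_iff_mult_less_eq)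
  also have "\<dots> \<longleftrightarrow> exv n i j k < a" unfolding exv_def using True by linarith
  finally show ?thesis unfolding cnt_def using True by simp
next
  case False
  then show ?thesis unfolding cnt_def exv_def by simp
qed

lemma cnt_mono: assumes "1 \<le> n" "a \<le> b" shows "cnt n i a j \<le> cnt n i b j"
proof -
  have "\<And>k. k < cnt n i a j \<Longrightarrow> k < cnt n i b j" using cnt_iff[OF assms(1)] assms(2) by (meson less_le_trans)
  then show ?thesis by (meson not_le order_less_irrefl)
qed

lemma cnt_pos_self: "1 \<le> n \<Longrightarrow> i < n \<Longrightarrow> 1 \<le> a \<Longrightarrow> 0 < cnt n i a i"
  using cnt_iff[of n 0 i a i] exv_self[of n i 0] by simp

lemma rr_nxt: assumes "1 \<le> n" "i < n" "j < n"
  shows "rr n i (nxt n j) = (if nxt n j = i then 0 else rr n i j + 1)"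
    and "nxt n j = i \<Longrightarrow> rr n i j + 1 = n"
proof -
  have nx: "nxt n j < n" using nxt_lt assms by simp
  have "nxt n j = Suc (i + rr n i j) mod n" unfolding nxt_def using rr_mod[OF assms] mod_Suc_eq by metis
  then have e: "(i + (rr n i j + 1)) mod n = nxt n j" by simp
  have r1: "rr n i j + 1 \<le> n" using rr_lt[OF assms(1), of i j] by simp
  show "rr n i (nxt n j) = (if nxt n j = i then 0 else rr n i j + 1)"
  proof (cases "nxt n j = i")
    case True
    then show ?thesis using rr_self assms by simp
  next
    case False
    have "rr n i j + 1 \<noteq> n"
    proof
      assume h: "rr n i j + 1 = n"
      have "(i + (rr n i j + 1)) mod n = i" unfolding h using assms by simp
      then show False using e False by simp
    qed
    then have "rr n i j + 1 < n" using r1 by simp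
    then show ?thesis using rr_unique[OF assms(1,2) nx _ e] False by simp
  qed
  show "nxt n j = i \<Longrightarrow> rr n i j + 1 = n"
  proof (rule ccontr)
    assume h: "nxt n j = i" "rr n i j + 1 \<noteq> n"
    then have "rr n i j + 1 < n" using r1 by simp
    then have "rr n i j + 1 = rr n i i" using rr_unique[OF assms(1,2,2) _ ] e h by simp
    then show False using rr_self assms by simp
  qed
qed

lemma exv_shift: assumes "1 \<le> n" "i < n" "j < n"
  shows "exv n i (nxt n j) k' = exv n i j k + 1 \<longleftrightarrow> k' = k + dl n i j"
proof (cases "nxt n j = i")
  case True
  have r: "rr n i j + k * n + 1 = (k + 1) * n" using rr_nxt(2)[OF assms True] by simp
  show ?thesis unfolding exv_def dl_def using rr_nxt(1)[OF assms] True r mult_right_cancel[of n k' "k+1"] assms(1) by auto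
next
  case False
  then show ?thesis using rr_nxt[OF assms] assms(1) unfolding exv_def dl_def by simp
qed

lemma cnt_nxt: assumes "1 \<le> n" "i < n" "j < n"
  shows "k + dl n i j < cnt n i a (nxt n j) \<longleftrightarrow> exv n i j k + 1 < a"
  using cnt_iff[OF assms(1)] exv_shift[OF assms, of "k + dl n i j" k] by simp


definition shm :: "nat \<Rightarrow> nat \<Rightarrow> nat \<Rightarrow> 'a::{zero,one} mat" where
  "shm r c s = mat r c (\<lambda>(k',k). if k' = k + s then 1 else 0)"

lemma shm_carrier[simp]: "shm r c s \<in> carrier_mat r c" unfolding shm_def by simp
lemma shm_dims[simp]: "dim_row (shm r c s) = r" "dim_col (shm r c s) = c" unfolding shm_def by simp_all

lemma sum_delta_mult: fixes f :: "nat \<Rightarrow> 'a::semiring_1"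
  shows "(\<Sum>x\<in>{0..<m}. f x * (if x = K then 1 else 0)) = (if K < m then f K else 0)"
proof -
  have "(\<Sum>x\<in>{0..<m}. f x * (if x = K then 1 else 0)) = (\<Sum>x\<in>{0..<m}. if x = K then f K else 0)"
    by (rule sum.cong) auto
  also have "\<dots> = (if K < m then f K else 0)" by (simp add: sum.delta')
  finally show ?thesis .
qed

lemma sum_delta_mult_left: fixes f :: "nat \<Rightarrow> 'a::semiring_1"
  shows "(\<Sum>x\<in>{0..<m}. (if K = x + s then 1 else 0) * f x) = (if s \<le> K \<and> K - s < m then f (K - s) else 0)"
proof -
  have "(\<Sum>x\<in>{0..<m}. (if K = x + s then 1 else 0) * f x) = (\<Sum>x\<in>{0..<m}. if x = K - s then (if s \<le> K then f x else 0) else 0)"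
    by (rule sum.cong) auto
  also have "\<dots> = (if K - s < m then (if s \<le> K then f (K - s) else 0) else 0)" by (simp add: sum.delta')
  finally show ?thesis by auto
qed

lemma mult_shm_right: fixes A :: "'a::comm_ring_1 mat"
  assumes "A \<in> carrier_mat p c'"
  shows "A * shm c' c s = mat p c (\<lambda>(r,k). if k + s < c' then A $$ (r, k+s) else 0)"
proof (rule eq_matI)
  fix r k assume rk: "r < dim_row (mat p c (\<lambda>(r,k). if k + s < c' then A $$ (r, k+s) else 0))"
    "k < dim_col (mat p c (\<lambda>(r,k). if k + s < c' then A $$ (r, k+s) else 0))"
  have "(A * shm c' c s) $$ (r,k) = row A r \<bullet> col (shm c' c s) k" using rk assms by simp
  also have "\<dots> = (\<Sum>x\<in>{0..<c'}. A $$ (r,x) * (if x = k + s then 1 else 0))"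
    unfolding scalar_prod_def using rk assms by (simp add: shm_def)
  also have "\<dots> = (if k + s < c' then A $$ (r, k+s) else 0)" by (rule sum_delta_mult)
  finally show "(A * shm c' c s) $$ (r,k) = mat p c (\<lambda>(r,k). if k + s < c' then A $$ (r, k+s) else 0) $$ (r,k)"
    using rk by simp
qed (use assms in auto)

lemma mult_shm_left: fixes B :: "'a::comm_ring_1 mat"
  assumes "B \<in> carrier_mat c e"
  shows "shm r c s * B = mat r e (\<lambda>(k',q). if s \<le> k' \<and> k' - s < c then B $$ (k' - s, q) else 0)"
proof (rule eq_matI)
  fix k' q assume rk: "k' < dim_row (mat r e (\<lambda>(k',q). if s \<le> k' \<and> k' - s < c then B $$ (k' - s, q) else 0))"
    "q < dim_col (mat r e (\<lambda>(k',q). if s \<le> k' \<and> k' - s < c then B $$ (k' - s, q) else 0))"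
  have "(shm r c s * B) $$ (k',q) = row (shm r c s) k' \<bullet> col B q" using rk assms by simp
  also have "\<dots> = (\<Sum>x\<in>{0..<c}. (if k' = x + s then 1 else 0) * B $$ (x,q))"
    unfolding scalar_prod_def using rk assms by (simp add: shm_def)
  also have "\<dots> = (if s \<le> k' \<and> k' - s < c then B $$ (k' - s, q) else 0)" by (rule sum_delta_mult_left)
  finally show "(shm r c s * B) $$ (k',q) = mat r e (\<lambda>(k',q). if s \<le> k' \<and> k' - s < c then B $$ (k' - s, q) else 0) $$ (k',q)"
    using rk by simp
qed (use assms in auto)

lemma shm_mult_vec: fixes y :: "'a::comm_ring_1 vec"
  assumes "y \<in> carrier_vec c"
  shows "shm r c s *\<^sub>v y = vec r (\<lambda>k'. if s \<le> k' \<and> k' - s < c then y $ (k' - s) else 0)"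
proof (rule eq_vecI)
  fix k' assume k': "k' < dim_vec (vec r (\<lambda>k'. if s \<le> k' \<and> k' - s < c then y $ (k' - s) else 0))"
  have "(shm r c s *\<^sub>v y) $ k' = row (shm r c s) k' \<bullet> y" using k' by simp
  also have "\<dots> = (\<Sum>x\<in>{0..<c}. (if k' = x + s then 1 else 0) * y $ x)"
    unfolding scalar_prod_def using k' assms by (simp add: shm_def)
  also have "\<dots> = (if s \<le> k' \<and> k' - s < c then y $ (k' - s) else 0)" by (rule sum_delta_mult_left)
  finally show "(shm r c s *\<^sub>v y) $ k' = vec r (\<lambda>k'. if s \<le> k' \<and> k' - s < c then y $ (k' - s) else 0) $ k'"
    using k' by simp
qed simp

lemma shm_mult: "(shm r m s1 :: 'a::comm_ring_1 mat) * shm m c s2 =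
   mat r c (\<lambda>(k1,k2). if k1 = k2 + s2 + s1 \<and> k2 + s2 < m then 1 else 0)"
  by (subst mult_shm_left[OF shm_carrier]) (auto simp: shm_def intro!: eq_matI)

lemma scalar_col_sum:
  fixes P :: "'a::comm_ring_1 mat"
  assumes "P \<in> carrier_mat p d" "q \<in> carrier_vec p" "v \<in> carrier_vec d"
  shows "(\<Sum>r\<in>{0..<d}. (q \<bullet> col P r) * v $ r) = q \<bullet> (P *\<^sub>v v)"
proof -
  have "q \<bullet> (P *\<^sub>v v) = (transpose_mat P *\<^sub>v q) \<bullet> v" using assms by (simp add: transpose_vec_mult_scalar)
  also have "\<dots> = (\<Sum>r\<in>{0..<d}. (transpose_mat P *\<^sub>v q) $ r * v $ r)" unfolding scalar_prod_def using assms by simp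
  also have "\<dots> = (\<Sum>r\<in>{0..<d}. (q \<bullet> col P r) * v $ r)"
  proof (rule sum.cong)
    fix r assume r: "r \<in> {0..<d}"
    have "(transpose_mat P *\<^sub>v q) $ r = col P r \<bullet> q" using r assms by simp
    also have "\<dots> = q \<bullet> col P r" using assms r by (intro comm_scalar_prod[of _ p]) auto
    finally show "(transpose_mat P *\<^sub>v q) $ r * v $ r = (q \<bullet> col P r) * v $ r" by simp
  qed simp
  finally show ?thesis by simp
qed


definition Um :: "nat \<Rightarrow> 'k::field rep \<Rightarrow> nat \<Rightarrow> 'k vec \<Rightarrow> nat \<Rightarrow> nat \<Rightarrow> 'k mat" where
  "Um n M i x a j = mat (dimv M j) (cnt n i a j) (\<lambda>(r,k). (pathmat n M i (exv n i j k) *\<^sub>v x) $ r)"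
definition Wm :: "nat \<Rightarrow> 'k::field rep \<Rightarrow> nat \<Rightarrow> 'k vec \<Rightarrow> nat \<Rightarrow> nat \<Rightarrow> 'k mat" where
  "Wm n M i q a j = mat (cnt n i a j) (dimv M j) (\<lambda>(k,c). q \<bullet> col (pathmat n M j (a - 1 - exv n i j k)) c)"
definition Cm :: "nat \<Rightarrow> nat \<Rightarrow> nat \<Rightarrow> nat \<Rightarrow> 'k::field mat" where
  "Cm n i a j = shm (cnt n i a (nxt n j)) (cnt n i a j) (dl n i j)"

lemma vec_index_id: "v \<in> carrier_vec d \<Longrightarrow> vec d (\<lambda>r. v $ r) = v"
  by (auto intro!: eq_vecI)

lemma Cm_dims[simp]: "dim_row (Cm n i a j) = cnt n i a (nxt n j)" "dim_col (Cm n i a j) = cnt n i a j"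
  unfolding Cm_def by simp_all

lemma Cm_carrier[simp]: "Cm n i a j \<in> carrier_mat (cnt n i a (nxt n j)) (cnt n i a j)"
  unfolding Cm_def by simp

lemma arr_act:
  assumes "is_rep n l M" "1 \<le> n" "i < n" "x \<in> carrier_vec (dimv M i)" "(i + e) mod n = j"
  shows "arr M j *\<^sub>v (pathmat n M i e *\<^sub>v x) = pathmat n M i (Suc e) *\<^sub>v x"
proof -
  have j: "j < n" using assms by auto
  have "arr M j \<in> carrier_mat (dimv M (nxt n j)) (dimv M j)" using rep_arr[OF assms(1) j] .
  moreover have "pathmat n M i e \<in> carrier_mat (dimv M j) (dimv M i)" using pathmat_carrier[OF assms(1-3), of e] unfolding assms(5) .
  ultimately show ?thesis using assms(4,5) by (simp add: assoc_mult_mat_vec)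
qed

lemma pathmat_one:
  assumes "is_rep n l M" "1 \<le> n" "j < n"
  shows "pathmat n M j (Suc 0) = arr M j"
  using rep_arr[OF assms(1,3)] assms by simp

lemma vtx: fixes i e t n :: nat assumes "e \<le> t" shows "((i + e) mod n + (t - e)) mod n = (i + t) mod n"
proof -
  have "((i + e) mod n + (t - e)) mod n = (i + e + (t - e)) mod n" by (simp add: mod_add_left_eq)
  then show ?thesis using assms by simp
qed

locale udat =
  fixes n l :: nat and M :: "'k::field rep" and i :: nat and x :: "'k vec" and a :: nat
  assumes rep: "is_rep n l M" and n: "1 \<le> n" and i: "i < n" and x: "x \<in> carrier_vec (dimv M i)"
    and xa: "pathmat n M i a *\<^sub>v x = 0\<^sub>v (dimv M ((i+a) mod n))"
begin

lemma act_x_high: assumes "a \<le> m" shows "pathmat n M i m *\<^sub>v x = 0\<^sub>v (dimv M ((i+m) mod n))"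
proof -
  obtain k where m: "m = a + k" using assms le_iff_add by blast
  have ia: "(i + a) mod n < n" using n by simp
  have "pathmat n M i m *\<^sub>v x = pathmat n M ((i+a) mod n) k *\<^sub>v (pathmat n M i a *\<^sub>v x)"
    using act_comp[OF rep n i x, of "(i+a) mod n" a k] m by simp
  also have "\<dots> = 0\<^sub>v (dimv M (((i+a) mod n + k) mod n))" unfolding xa
    using pathmat_carrier[OF rep n ia, of k] by simp
  also have "((i+a) mod n + k) mod n = (i + m) mod n" using m by (simp add: mod_add_left_eq add.assoc)
  finally show ?thesis .
qed

lemma U_carrier: "j < n \<Longrightarrow> Um n M i x a j \<in> carrier_mat (dimv M j) (cnt n i a j)"
  unfolding Um_def by simp

lemma act_carrier_j: "j < n \<Longrightarrow> pathmat n M i (exv n i j k) *\<^sub>v x \<in> carrier_vec (dimv M j)"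
  using act_carrier[OF rep n i x, of "exv n i j k"] exv_mod[OF n i] by simp

lemma U_col: assumes "j < n" "k < cnt n i a j"
  shows "col (Um n M i x a j) k = pathmat n M i (exv n i j k) *\<^sub>v x"
proof -
  have "col (Um n M i x a j) k = vec (dimv M j) (\<lambda>r. (pathmat n M i (exv n i j k) *\<^sub>v x) $ r)"
    unfolding Um_def using assms by (simp add: col_mat)
  then show ?thesis using vec_index_id[OF act_carrier_j[OF assms(1), of k]] by simp
qed

lemma U_entry: assumes "j < n" "k < cnt n i a j" "r < dimv M j"
  shows "Um n M i x a j $$ (r,k) = (pathmat n M i (exv n i j k) *\<^sub>v x) $ r"
  unfolding Um_def using assms by simp

lemma AU: assumes j: "j < n"
  shows "arr M j * Um n M i x a j = Um n M i x a (nxt n j) * Cm n i a j"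
proof (rule eq_matI)
  have nj: "nxt n j < n" using nxt_lt n by simp
  have A: "arr M j \<in> carrier_mat (dimv M (nxt n j)) (dimv M j)" using rep_arr[OF rep j] .
  have R: "Um n M i x a (nxt n j) * Cm n i a j = mat (dimv M (nxt n j)) (cnt n i a j)
     (\<lambda>(r,k). if k + dl n i j < cnt n i a (nxt n j) then Um n M i x a (nxt n j) $$ (r, k + dl n i j) else 0)"
    unfolding Cm_def by (rule mult_shm_right[OF U_carrier[OF nj]])
  fix r k assume rk: "r < dim_row (Um n M i x a (nxt n j) * Cm n i a j)" "k < dim_col (Um n M i x a (nxt n j) * Cm n i a j)"
  then have r: "r < dimv M (nxt n j)" and k: "k < cnt n i a j" using U_carrier[OF nj] by auto
  let ?e = "exv n i j k"
  have "(arr M j * Um n M i x a j) $$ (r,k) = row (arr M j) r \<bullet> col (Um n M i x a j) k"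
    using A U_carrier[OF j] r k by simp
  also have "\<dots> = (arr M j *\<^sub>v col (Um n M i x a j) k) $ r" using A r by simp
  also have "\<dots> = (pathmat n M i (Suc ?e) *\<^sub>v x) $ r"
    unfolding U_col[OF j k] using arr_act[OF rep n i x exv_mod[OF n i j]] by simp
  finally have L: "(arr M j * Um n M i x a j) $$ (r,k) = (pathmat n M i (Suc ?e) *\<^sub>v x) $ r" .
  show "(arr M j * Um n M i x a j) $$ (r,k) = (Um n M i x a (nxt n j) * Cm n i a j) $$ (r,k)"
  proof (cases "k + dl n i j < cnt n i a (nxt n j)")
    case True
    have "exv n i (nxt n j) (k + dl n i j) = Suc ?e" using exv_shift[OF n i j] by simp
    then show ?thesis unfolding L R using True r k U_entry[OF nj True r] by simp
  next
    case False
    then have "a \<le> Suc ?e" using cnt_nxt[OF n i j] by simp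
    then have "pathmat n M i (Suc ?e) *\<^sub>v x = 0\<^sub>v (dimv M ((i + Suc ?e) mod n))" by (rule act_x_high)
    moreover have "(i + Suc ?e) mod n = nxt n j" using exv_mod[OF n i j, of k] n unfolding nxt_def
      by (metis add_Suc_right mod_Suc_eq)
    ultimately show ?thesis unfolding L R using False r k by simp
  qed
qed (insert rep_arr[OF rep j] U_carrier[OF j] U_carrier[OF nxt_lt[OF n, of j]], auto)

end


locale wdat = udat n l M i x a for n l and M :: "'k::field rep" and i x a +
  fixes q :: "'k vec" and t :: nat
  assumes at: "a = Suc t" and q: "q \<in> carrier_vec (dimv M ((i+t) mod n))"
    and ml: "maxlen n M a"
    and q1: "q \<bullet> (pathmat n M i t *\<^sub>v x) = 1"
    and q0: "\<And>s. 1 \<le> s \<Longrightarrow> s * n \<le> t \<Longrightarrow> q \<bullet> (pathmat n M i (t - s*n) *\<^sub>v x) = 0"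
begin

lemma W_carrier: "j < n \<Longrightarrow> Wm n M i q a j \<in> carrier_mat (cnt n i a j) (dimv M j)"
  unfolding Wm_def by simp

lemma e_le: "k < cnt n i a j \<Longrightarrow> exv n i j k \<le> t"
  using cnt_iff[OF n] at by simp

lemma Wpath_carrier: assumes "j < n" "k < cnt n i a j"
  shows "pathmat n M j (t - exv n i j k) \<in> carrier_mat (dimv M ((i+t) mod n)) (dimv M j)"
proof -
  have "(j + (t - exv n i j k)) mod n = (i + t) mod n"
    using vtx[OF e_le[OF assms(2)], of i n] exv_mod[OF n i assms(1), of k] by simp
  then show ?thesis using pathmat_carrier[OF rep n assms(1), of "t - exv n i j k"] by simp
qed

lemma W_row_scalar: assumes j: "j < n" and k: "k < cnt n i a j" and v: "v \<in> carrier_vec (dimv M j)"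
  shows "row (Wm n M i q a j) k \<bullet> v = q \<bullet> (pathmat n M j (t - exv n i j k) *\<^sub>v v)"
proof -
  let ?P = "pathmat n M j (t - exv n i j k)"
  have "row (Wm n M i q a j) k = vec (dimv M j) (\<lambda>c. q \<bullet> col ?P c)"
    unfolding Wm_def using k at by (simp add: row_mat)
  then have "row (Wm n M i q a j) k \<bullet> v = (\<Sum>r\<in>{0..<dimv M j}. (q \<bullet> col ?P r) * v $ r)"
    unfolding scalar_prod_def using v by simp
  also have "\<dots> = q \<bullet> (?P *\<^sub>v v)" by (rule scalar_col_sum[OF Wpath_carrier[OF j k] q v])
  finally show ?thesis .
qed

lemma WU: assumes j: "j < n" shows "Wm n M i q a j * Um n M i x a j = 1\<^sub>m (cnt n i a j)"
proof (rule eq_matI)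
  fix k k' assume kk: "k < dim_row (1\<^sub>m (cnt n i a j) :: 'k mat)" "k' < dim_col (1\<^sub>m (cnt n i a j) :: 'k mat)"
  then have k: "k < cnt n i a j" and k': "k' < cnt n i a j" by auto
  let ?e = "exv n i j k" and ?e' = "exv n i j k'"
  have "(Wm n M i q a j * Um n M i x a j) $$ (k,k') = row (Wm n M i q a j) k \<bullet> col (Um n M i x a j) k'"
    using W_carrier[OF j] U_carrier[OF j] k k' by simp
  also have "\<dots> = q \<bullet> (pathmat n M j (t - ?e) *\<^sub>v (pathmat n M i ?e' *\<^sub>v x))"
    unfolding U_col[OF j k'] by (rule W_row_scalar[OF j k act_carrier_j[OF j]])
  also have "\<dots> = q \<bullet> (pathmat n M i (?e' + (t - ?e)) *\<^sub>v x)"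
    using act_comp[OF rep n i x exv_mod[OF n i j, of k', symmetric]] by simp
  finally have E: "(Wm n M i q a j * Um n M i x a j) $$ (k,k') = q \<bullet> (pathmat n M i (?e' + (t - ?e)) *\<^sub>v x)" .
  have le: "?e \<le> t" "?e' \<le> t" using e_le k k' by auto
  show "(Wm n M i q a j * Um n M i x a j) $$ (k,k') = 1\<^sub>m (cnt n i a j) $$ (k,k')"
  proof (cases k k' rule: linorder_cases)
    case less
    define d where "d = k' - k"
    have kd: "k' = k + d" "1 \<le> d" using less d_def by auto
    have "?e' = ?e + d * n" unfolding exv_def kd(1) by (simp add: algebra_simps)
    moreover have "n \<le> d * n" using kd(2) by simp
    ultimately have big: "a \<le> ?e' + (t - ?e)" using at le n by linarith
    have idx: "(i + (?e' + (t - ?e))) mod n = (i + t) mod n"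
    proof -
      have "(i + (?e' + (t - ?e))) mod n = ((i + ?e') mod n + (t - ?e)) mod n"
        by (simp add: mod_add_left_eq add.assoc)
      also have "(i + ?e') mod n = (i + ?e) mod n" using exv_mod[OF n i j] by simp
      finally show ?thesis using vtx[OF le(1)] by simp
    qed
    have "q \<bullet> (pathmat n M i (?e' + (t - ?e)) *\<^sub>v x) = 0"
      unfolding act_x_high[OF big] idx using q by simp
    then show ?thesis unfolding E using less kk by simp
  next
    case equal
    then show ?thesis unfolding E using q1 le kk by simp
  next
    case greater
    define s where "s = k - k'"
    have s1: "1 \<le> s" using greater s_def by simp
    have ks: "k = k' + s" using greater s_def by simp
    have es: "?e = ?e' + s * n" unfolding exv_def ks by (simp add: algebra_simps)
    have sn: "s * n \<le> t" using es le by simp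
    have "?e' + (t - ?e) = t - s * n" using es le by simp
    then show ?thesis unfolding E using q0[OF s1 sn] greater kk by simp
  qed
qed (use W_carrier U_carrier assms in auto)

lemma WA: assumes j: "j < n"
  shows "Wm n M i q a (nxt n j) * arr M j = Cm n i a j * Wm n M i q a j"
proof (rule eq_matI)
  have nj: "nxt n j < n" using nxt_lt n by simp
  have A: "arr M j \<in> carrier_mat (dimv M (nxt n j)) (dimv M j)" using rep_arr[OF rep j] .
  have R: "Cm n i a j * Wm n M i q a j = mat (cnt n i a (nxt n j)) (dimv M j)
     (\<lambda>(k',c). if dl n i j \<le> k' \<and> k' - dl n i j < cnt n i a j then Wm n M i q a j $$ (k' - dl n i j, c) else 0)"
    unfolding Cm_def by (rule mult_shm_left[OF W_carrier[OF j]])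
  fix k' c assume kc: "k' < dim_row (Cm n i a j * Wm n M i q a j)" "c < dim_col (Cm n i a j * Wm n M i q a j)"
  then have k': "k' < cnt n i a (nxt n j)" and c: "c < dimv M j" using W_carrier[OF j] by auto
  let ?e' = "exv n i (nxt n j) k'"
  let ?P = "pathmat n M (nxt n j) (t - ?e')"
  have PA: "?P * arr M j = pathmat n M j (Suc (t - ?e'))"
    using pathmat_add[OF rep n j, of 1 "t - ?e'"] pathmat_one[OF rep n j] unfolding nxt_def by simp
  have "(Wm n M i q a (nxt n j) * arr M j) $$ (k',c) = row (Wm n M i q a (nxt n j)) k' \<bullet> col (arr M j) c"
    using W_carrier[OF nj] A k' c by simp
  also have "\<dots> = q \<bullet> (?P *\<^sub>v col (arr M j) c)"
    using W_row_scalar[OF nj k'] A c by simp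
  also have "?P *\<^sub>v col (arr M j) c = col (?P * arr M j) c"
    by (rule col_mult2[symmetric, OF Wpath_carrier[OF nj k'] A c])
  finally have L: "(Wm n M i q a (nxt n j) * arr M j) $$ (k',c) = q \<bullet> col (pathmat n M j (Suc (t - ?e'))) c"
    unfolding PA .
  show "(Wm n M i q a (nxt n j) * arr M j) $$ (k',c) = (Cm n i a j * Wm n M i q a j) $$ (k',c)"
  proof (cases "dl n i j \<le> k'")
    case True
    define k where "k = k' - dl n i j"
    have kk: "k' = k + dl n i j" using True k_def by simp
    have ee: "?e' = exv n i j k + 1" using exv_shift[OF n i j] kk by simp
    have klt: "k < cnt n i a j" using cnt_iff[OF n] k' ee by simp
    have "Suc (t - ?e') = t - exv n i j k" using ee e_le[OF klt] cnt_iff[OF n] k' at by simp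
    then show ?thesis unfolding L R using True klt kc c k_def
      by (simp add: Wm_def at)
  next
    case False
    then have "dl n i j = 1" "k' = 0" unfolding dl_def by (auto split: if_splits)
    then have ni: "nxt n j = i" unfolding dl_def by (auto split: if_splits)
    have "?e' = 0" using \<open>k' = 0\<close> ni exv_self[OF n i] by simp
    then have "pathmat n M j (Suc (t - ?e')) = 0\<^sub>m (dimv M ((j + a) mod n)) (dimv M j)"
      using ml j at unfolding maxlen_def by simp
    moreover have "(j + a) mod n = (i + t) mod n"
    proof -
      have "(j + a) mod n = (Suc j + t) mod n" using at by simp
      also have "\<dots> = (Suc j mod n + t) mod n" by (simp add: mod_add_left_eq)
      also have "Suc j mod n = i" using ni unfolding nxt_def .
      finally show ?thesis using i by (simp add: mod_add_left_eq)
    qed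
    ultimately show ?thesis unfolding L R using False c kc q by simp
  qed
qed (insert rep_arr[OF rep j] W_carrier[OF j] W_carrier[OF nxt_lt[OF n, of j]], auto)

lemma Wx: "Wm n M i q a i *\<^sub>v x = unit_vec (cnt n i a i) 0"
proof -
  have c0: "0 < cnt n i a i" using cnt_pos_self[OF n i] at by simp
  have xc: "x = col (Um n M i x a i) 0" using U_col[OF i c0] exv_self[OF n i, of 0] x by simp
  have "Wm n M i q a i *\<^sub>v x = Wm n M i q a i *\<^sub>v col (Um n M i x a i) 0" by (rule arg_cong[OF xc])
  also have "\<dots> = col (Wm n M i q a i * Um n M i x a i) 0"
    by (rule col_mult2[symmetric, OF W_carrier[OF i] U_carrier[OF i] c0])
  finally have "Wm n M i q a i *\<^sub>v x = col (Wm n M i q a i * Um n M i x a i) 0" .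
  also have "\<dots> = unit_vec (cnt n i a i) 0" unfolding WU[OF i] using c0 by simp
  finally show ?thesis .
qed

end


lemma mat_vec_unit: fixes A :: "'a::field mat"
  assumes "A \<in> carrier_mat p s" "k < s" shows "A *\<^sub>v unit_vec s k = col A k"
proof (rule eq_vecI)
  fix r assume r: "r < dim_vec (col A k)"
  have "row A r \<in> carrier_vec s" using assms by auto
  then have "row A r \<bullet> unit_vec s k = row A r $ k" using assms by (simp add: scalar_prod_right_unit)
  then show "(A *\<^sub>v unit_vec s k) $ r = col A k $ r" using r assms by simp
qed (use assms in auto)

lemma vec_minus_zero: fixes v :: "'a::field vec" shows "v \<in> carrier_vec m \<Longrightarrow> w \<in> carrier_vec m \<Longrightarrow> v - w = 0\<^sub>v m \<Longrightarrow> v = w"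
proof (intro eq_vecI)
  fix r assume "v \<in> carrier_vec m" "w \<in> carrier_vec m" "v - w = 0\<^sub>v m" "r < dim_vec w"
  then have "(v - w) $ r = 0" by simp
  then show "v $ r = w $ r" using \<open>r < dim_vec w\<close> \<open>w \<in> carrier_vec m\<close> by simp
qed auto

lemma rankfact:
  fixes K :: "'a::field mat"
  assumes K: "K \<in> carrier_mat d d" and idem: "K * K = K"
  shows "\<exists>s V Z. V \<in> carrier_mat d s \<and> Z \<in> carrier_mat s d \<and> V * Z = K \<and> Z * V = 1\<^sub>m s"
proof -
  interpret vec_space "TYPE('a)" d .
  have cK: "set (cols K) \<subseteq> carrier_vec d" using K cols_dim by blast
  obtain S0 where S0: "finite S0" "maximal S0 (\<lambda>T. T \<subseteq> set (cols K) \<and> lin_indpt T)"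
    using maximal_exists[of "\<lambda>T. T \<subseteq> set (cols K) \<and> lin_indpt T" "card (set (cols K))" "{}"]
    by (meson List.finite_set card_mono empty_iff empty_subsetI finite_lin_indpt2 rev_finite_subset)
  then have S0sub: "S0 \<subseteq> set (cols K)" "lin_indpt S0" unfolding maximal_def by auto
  obtain vs where vs: "set vs = S0" "distinct vs" using finite_distinct_list[OF S0(1)] by blast
  define s where "s = length vs"
  define V where "V = mat_of_cols d vs"
  have vsc: "set vs \<subseteq> carrier_vec d" using vs S0sub cK by auto
  have V: "V \<in> carrier_mat d s" unfolding V_def s_def by simp
  have colsV: "cols V = vs" unfolding V_def using vsc by (simp add: cols_mat_of_cols)
  have inspan: "w \<in> span S0" if w: "w \<in> set (cols K)" for w
  proof (cases "w \<in> S0")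
    case True then show ?thesis using in_own_span S0sub cK by blast
  next
    case False
    have "insert w S0 \<noteq> S0" using False by auto
    then have "\<not> lin_indpt (insert w S0)" using S0(2) w S0sub(1) unfolding maximal_def by blast
    then have "lin_dep (S0 \<union> {w})" by simp
    then show ?thesis using lin_dep_iff_in_span[of S0 w] S0sub cK w False by auto
  qed
  have ex: "\<exists>z \<in> carrier_vec s. V *\<^sub>v z = w" if "w \<in> span S0" for w
  proof -
    have "w \<in> span_list vs" using span_list_as_span[OF vsc] vs that by simp
    then obtain f where "w = lincomb_list f vs" unfolding span_list_def by auto
    moreover have "\<forall>w\<in>set vs. dim_vec w = d" using vsc by auto
    ultimately have "w = V *\<^sub>v vec s f" unfolding V_def s_def using lincomb_list_as_mat_mult by auto
    then show ?thesis by auto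
  qed
  define zc where "zc = (\<lambda>c. SOME z. z \<in> carrier_vec s \<and> V *\<^sub>v z = col K c)"
  have zc: "zc c \<in> carrier_vec s \<and> V *\<^sub>v zc c = col K c" if c: "c < d" for c
  proof -
    have "col K c \<in> set (cols K)" using K c by (simp add: cols_def)
    then have "\<exists>z. z \<in> carrier_vec s \<and> V *\<^sub>v z = col K c" using ex inspan by blast
    then show ?thesis unfolding zc_def by (rule someI_ex)
  qed
  define Z where "Z = mat s d (\<lambda>(r,c). zc c $ r)"
  have Z: "Z \<in> carrier_mat s d" unfolding Z_def by simp
  have colZ: "col Z c = zc c" if "c < d" for c
    unfolding Z_def using that zc[OF that] by (auto intro!: eq_vecI)
  have VZ: "V * Z = K"
  proof (rule eq_matI)
    fix r c assume rc: "r < dim_row K" "c < dim_col K"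
    have "(V * Z) $$ (r,c) = col (V * Z) c $ r" using V Z rc K by simp
    also have "\<dots> = (V *\<^sub>v zc c) $ r" using V Z rc K colZ by (simp add: col_mult2)
    also have "\<dots> = K $$ (r,c)" using zc rc K by simp
    finally show "(V * Z) $$ (r,c) = K $$ (r,c)" .
  qed (use V Z K in auto)
  have KV: "K * V = V"
  proof (rule eq_matI)
    fix r k assume rk: "r < dim_row V" "k < dim_col V"
    have "col V k \<in> set (cols K)" using colsV rk vs S0sub by (metis cols_length cols_nth nth_mem subsetD)
    then obtain m where m: "m < d" "col V k = col K m" using K by (metis cols_length cols_nth in_set_conv_nth carrier_matD(2))
    have "(K * V) $$ (r,k) = (K *\<^sub>v col V k) $ r" using K V rk by simp
    also have "K *\<^sub>v col V k = col (K * K) m" unfolding m(2) by (rule col_mult2[symmetric, OF K K m(1)])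
    also have "\<dots> = col V k" using idem m by simp
    finally show "(K * V) $$ (r,k) = V $$ (r,k)" using rk by simp
  qed (use V K in auto)
  have inj: "y = 0\<^sub>v s" if y: "y \<in> carrier_vec s" "V *\<^sub>v y = 0\<^sub>v d" for y
  proof (rule ccontr)
    assume "y \<noteq> 0\<^sub>v s"
    then have "lin_dep (set (cols V))" using lin_depI[OF V y(1) _ y(2)] colsV vs by auto
    then show False using S0sub colsV vs by simp
  qed
  have ZV: "Z * V = 1\<^sub>m s"
  proof -
    have VZV: "V * (Z * V) = V" using VZ KV V Z by (metis assoc_mult_mat)
    have cu: "col (Z * V) k = unit_vec s k" if k: "k < s" for k
    proof -
      have c1: "col (Z * V) k \<in> carrier_vec s" using Z V k by simp
      have "V *\<^sub>v (col (Z * V) k - unit_vec s k) = V *\<^sub>v col (Z * V) k - V *\<^sub>v unit_vec s k"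
        using V c1 by (simp add: mult_minus_distrib_mat_vec)
      also have "V *\<^sub>v col (Z * V) k = col (V * (Z * V)) k"
        using col_mult2[of V d s "Z * V" s k] V Z k by (metis mult_carrier_mat)
      also have "V *\<^sub>v unit_vec s k = col V k" using V k by (simp add: mat_vec_unit)
      finally have "V *\<^sub>v (col (Z * V) k - unit_vec s k) = 0\<^sub>v d" using VZV V k by simp
      then have "col (Z * V) k - unit_vec s k = 0\<^sub>v s" using inj c1 by simp
      then show ?thesis using c1 vec_minus_zero[OF c1, of "unit_vec s k"] by simp
    qed
    show ?thesis
    proof (rule eq_matI)
      fix r k assume rk: "r < dim_row (1\<^sub>m s :: 'a mat)" "k < dim_col (1\<^sub>m s :: 'a mat)"
      have "(Z * V) $$ (r,k) = col (Z * V) k $ r" using Z V rk by simp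
      also have "\<dots> = (1\<^sub>m s :: 'a mat) $$ (r,k)" using cu rk by simp
      finally show "(Z * V) $$ (r,k) = (1\<^sub>m s :: 'a mat) $$ (r,k)" .
    qed (use Z V in auto)
  qed
  show ?thesis using V Z VZ ZV by blast
qed

lemma mat_minus_zero: "A \<in> carrier_mat a b \<Longrightarrow> A - 0\<^sub>m a b = (A :: 'a::field mat)"
  by (intro eq_matI) auto

lemma mat_add_minus: "A \<in> carrier_mat a b \<Longrightarrow> B \<in> carrier_mat a b \<Longrightarrow> A + (B - A) = (B :: 'a::field mat)"
  by (intro eq_matI) auto

lemma vertex_split_aux:
  fixes U :: "'a::field mat"
  assumes U: "U \<in> carrier_mat d c" and W: "W \<in> carrier_mat c d" and WU: "W * U = 1\<^sub>m c"
    and V: "V \<in> carrier_mat d s" and Z: "Z \<in> carrier_mat s d"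
    and VZ: "V * Z = 1\<^sub>m d - U * W" and ZV: "Z * V = 1\<^sub>m s"
  shows "W * V = 0\<^sub>m c s \<and> Z * U = 0\<^sub>m s c \<and> U * W + V * Z = 1\<^sub>m d"
proof -
  define K where "K = 1\<^sub>m d - U * W"
  have UW: "U * W \<in> carrier_mat d d" using U W by simp
  have K: "K \<in> carrier_mat d d" unfolding K_def using UW by (rule minus_carrier_mat)
  have KU: "K * U = 0\<^sub>m d c"
  proof -
    have "K * U = 1\<^sub>m d * U - (U * W) * U" unfolding K_def using minus_mult_distrib_mat[OF one_carrier_mat UW U] .
    also have "(U * W) * U = U * (W * U)" using U W by (simp add: assoc_mult_mat)
    also have "\<dots> = U" using WU U by simp
    finally show ?thesis using U by (simp add: minus_r_inv_mat)
  qed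
  have WK: "W * K = 0\<^sub>m c d"
  proof -
    have "W * K = W * 1\<^sub>m d - W * (U * W)" unfolding K_def using mult_minus_distrib_mat[OF W one_carrier_mat UW] .
    also have "W * (U * W) = (W * U) * W" using U W by (simp add: assoc_mult_mat)
    also have "\<dots> = W" using WU W by simp
    finally show ?thesis using W by (simp add: minus_r_inv_mat)
  qed
  have "W * V = W * V * (Z * V)" using ZV W V by simp
  also have "\<dots> = W * (V * Z) * V"
  proof -
    have e1: "W * V * Z * V = W * V * (Z * V)" by (rule assoc_mult_mat[of "W*V" c s Z d V s]) (use W V Z in auto)
    have e2: "W * V * Z = W * (V * Z)" by (rule assoc_mult_mat[OF W V Z])
    show ?thesis using e1 e2 by simp
  qed
  also have "\<dots> = 0\<^sub>m c s" using WK V unfolding VZ K_def[symmetric] by simp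
  finally have WV: "W * V = 0\<^sub>m c s" .
  have "Z * U = (Z * V) * (Z * U)" using ZV Z U by simp
  also have "\<dots> = Z * ((V * Z) * U)"
  proof -
    have e1: "Z * V * (Z * U) = Z * (V * (Z * U))" by (rule assoc_mult_mat[OF Z V]) (use Z U in auto)
    have e2: "V * Z * U = V * (Z * U)" by (rule assoc_mult_mat[OF V Z U])
    show ?thesis using e1 e2 by simp
  qed
  also have "\<dots> = 0\<^sub>m s c" using KU Z unfolding VZ K_def[symmetric] by simp
  finally have ZU: "Z * U = 0\<^sub>m s c" .
  have "U * W + V * Z = 1\<^sub>m d" unfolding VZ using UW by (simp add: mat_add_minus)
  then show ?thesis using WV ZU by simp
qed


lemma vertex_split:
  fixes U :: "'a::field mat"
  assumes U: "U \<in> carrier_mat d c" and W: "W \<in> carrier_mat c d" and WU: "W * U = 1\<^sub>m c"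
  shows "\<exists>s V Z. V \<in> carrier_mat d s \<and> Z \<in> carrier_mat s d \<and> W * V = 0\<^sub>m c s \<and> Z * U = 0\<^sub>m s c \<and>
     Z * V = 1\<^sub>m s \<and> U * W + V * Z = 1\<^sub>m d \<and> V * Z = 1\<^sub>m d - U * W"
proof -
  define K where "K = 1\<^sub>m d - U * W"
  have UW: "U * W \<in> carrier_mat d d" using U W by simp
  have K: "K \<in> carrier_mat d d" unfolding K_def using UW by (rule minus_carrier_mat)
  have KU: "K * U = 0\<^sub>m d c"
  proof -
    have "K * U = 1\<^sub>m d * U - (U * W) * U" unfolding K_def using minus_mult_distrib_mat[OF one_carrier_mat UW U] .
    also have "(U * W) * U = U * (W * U)" using U W by (simp add: assoc_mult_mat)
    also have "\<dots> = U" using WU U by simp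
    finally show ?thesis using U by (simp add: minus_r_inv_mat)
  qed
  have KK: "K * K = K"
  proof -
    have "K * K = K * 1\<^sub>m d - K * (U * W)" unfolding K_def[of] using mult_minus_distrib_mat[OF K one_carrier_mat UW]
      by (simp add: K_def)
    also have "K * (U * W) = (K * U) * W" using K U W by (simp add: assoc_mult_mat)
    also have "\<dots> = 0\<^sub>m d d" unfolding KU using W by simp
    finally show ?thesis using K by (simp add: mat_minus_zero)
  qed
  obtain s V Z where VZ: "V \<in> carrier_mat d s" "Z \<in> carrier_mat s d" "V * Z = K" "Z * V = 1\<^sub>m s"
    using rankfact[OF K KK] by blast
  show ?thesis using vertex_split_aux[OF U W WU VZ(1,2) VZ(3)[unfolded K_def] VZ(4)] VZ K_def by blast
qed

lemma four_block_col0: "A \<in> carrier_mat a b \<Longrightarrow> four_block_mat A (0\<^sub>m a 0) (0\<^sub>m 0 b) (0\<^sub>m 0 0) = A"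
  by (intro eq_matI) auto

lemma stack_mult:
  fixes X :: "'a::field mat"
  assumes X: "X \<in> carrier_mat p d'" and Y: "Y \<in> carrier_mat q d'" and A: "A \<in> carrier_mat d' d"
  shows "four_block_mat X (0\<^sub>m p 0) Y (0\<^sub>m q 0) * A = four_block_mat (X * A) (0\<^sub>m p 0) (Y * A) (0\<^sub>m q 0)"
proof -
  have "four_block_mat X (0\<^sub>m p 0) Y (0\<^sub>m q 0) * four_block_mat A (0\<^sub>m d' 0) (0\<^sub>m 0 d) (0\<^sub>m 0 0) =
    four_block_mat (X * A + 0\<^sub>m p 0 * 0\<^sub>m 0 d) (X * 0\<^sub>m d' 0 + 0\<^sub>m p 0 * 0\<^sub>m 0 0)
      (Y * A + 0\<^sub>m q 0 * 0\<^sub>m 0 d) (Y * 0\<^sub>m d' 0 + 0\<^sub>m q 0 * 0\<^sub>m 0 0)"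
    by (rule mult_four_block_mat) (use X Y A in auto)
  then show ?thesis unfolding four_block_col0[OF A] using X Y A by simp
qed

lemma mult_stack:
  fixes A :: "'a::field mat"
  assumes A: "A \<in> carrier_mat d' d" and U: "U \<in> carrier_mat d c" and V: "V \<in> carrier_mat d s"
  shows "A * four_block_mat U V (0\<^sub>m 0 c) (0\<^sub>m 0 s) = four_block_mat (A * U) (A * V) (0\<^sub>m 0 c) (0\<^sub>m 0 s)"
proof -
  have "four_block_mat A (0\<^sub>m d' 0) (0\<^sub>m 0 d) (0\<^sub>m 0 0) * four_block_mat U V (0\<^sub>m 0 c) (0\<^sub>m 0 s) =
    four_block_mat (A * U + 0\<^sub>m d' 0 * 0\<^sub>m 0 c) (A * V + 0\<^sub>m d' 0 * 0\<^sub>m 0 s)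
      (0\<^sub>m 0 d * U + 0\<^sub>m 0 0 * 0\<^sub>m 0 c) (0\<^sub>m 0 d * V + 0\<^sub>m 0 0 * 0\<^sub>m 0 s)"
    by (rule mult_four_block_mat) (use A U V in auto)
  then show ?thesis unfolding four_block_col0[OF A] using A U V by simp
qed

lemma four_block_zero_parts:
  fixes A :: "'a::field mat"
  assumes "A \<in> carrier_mat a c" "D \<in> carrier_mat b e" "four_block_mat A B C D = 0\<^sub>m (a+b) (c+e)"
  shows "A = 0\<^sub>m a c" "D = 0\<^sub>m b e"
proof -
  show "A = 0\<^sub>m a c"
  proof (rule eq_matI)
    fix r k assume "r < dim_row (0\<^sub>m a c :: 'a mat)" "k < dim_col (0\<^sub>m a c :: 'a mat)"
    then have "four_block_mat A B C D $$ (r,k) = A $$ (r,k)" using assms(1,2) by simp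
    then show "A $$ (r,k) = 0\<^sub>m a c $$ (r,k)" using assms(3) \<open>r < _\<close> \<open>k < _\<close> by simp
  qed (use assms in auto)
  show "D = 0\<^sub>m b e"
  proof (rule eq_matI)
    fix r k assume "r < dim_row (0\<^sub>m b e :: 'a mat)" "k < dim_col (0\<^sub>m b e :: 'a mat)"
    then have "four_block_mat A B C D $$ (a + r, c + k) = D $$ (r,k)" using assms(1,2) by simp
    then show "D $$ (r,k) = 0\<^sub>m b e $$ (r,k)" using assms(3) \<open>r < _\<close> \<open>k < _\<close> by simp
  qed (use assms in auto)
qed

lemma mult_empty: fixes A :: "'a::field mat"
  shows "A \<in> carrier_mat a 0 \<Longrightarrow> B \<in> carrier_mat 0 b \<Longrightarrow> A * B = 0\<^sub>m a b"
  by (intro eq_matI) (auto simp: scalar_prod_def)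


lemma pathmat_carrier_q:
  assumes "\<And>i. i < n \<Longrightarrow> arr M i \<in> carrier_mat (dimv M (nxt n i)) (dimv M i)" "1 \<le> n" "j < n"
  shows "pathmat n M j m \<in> carrier_mat (dimv M ((j+m) mod n)) (dimv M j)"
proof (induction m)
  case 0 then show ?case using assms by simp
next
  case (Suc m)
  have "arr M ((j+m) mod n) \<in> carrier_mat (dimv M ((j + Suc m) mod n)) (dimv M ((j+m) mod n))"
    using assms(1)[of "(j+m) mod n"] assms nxt_mod[of n j m] by auto
  then show ?case using Suc by simp
qed

locale splitdat =
  fixes n l :: nat and M :: "'k::field rep" and c :: "nat \<Rightarrow> nat" and U W C :: "nat \<Rightarrow> 'k mat"
  assumes rep: "is_rep n l M" and n: "1 \<le> n"
    and U: "\<And>j. j < n \<Longrightarrow> U j \<in> carrier_mat (dimv M j) (c j)"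
    and W: "\<And>j. j < n \<Longrightarrow> W j \<in> carrier_mat (c j) (dimv M j)"
    and C: "\<And>j. j < n \<Longrightarrow> C j \<in> carrier_mat (c (nxt n j)) (c j)"
    and WU: "\<And>j. j < n \<Longrightarrow> W j * U j = 1\<^sub>m (c j)"
    and AU: "\<And>j. j < n \<Longrightarrow> arr M j * U j = U (nxt n j) * C j"
    and WA: "\<And>j. j < n \<Longrightarrow> W (nxt n j) * arr M j = C j * W j"
begin

lemma decomp:
  assumes nzX: "\<exists>j<n. 0 < c j" and ne: "\<exists>j<n. U j * W j \<noteq> 1\<^sub>m (dimv M j)"
  shows "\<exists>X Y. is_rep n l X \<and> is_rep n l Y \<and> nonzero_rep n X \<and> nonzero_rep n Y \<and> rep_iso n M (dsum n X Y)"
proof -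
  define Pp where "Pp = (\<lambda>j s V Z. V \<in> carrier_mat (dimv M j) s \<and> Z \<in> carrier_mat s (dimv M j) \<and>
     W j * V = 0\<^sub>m (c j) s \<and> Z * U j = 0\<^sub>m s (c j) \<and> Z * V = 1\<^sub>m s \<and> U j * W j + V * Z = 1\<^sub>m (dimv M j) \<and>
     V * Z = 1\<^sub>m (dimv M j) - U j * W j)"
  have "\<forall>j. \<exists>t. j < n \<longrightarrow> Pp j (fst t) (fst (snd t)) (snd (snd t))"
  proof
    fix j show "\<exists>t. j < n \<longrightarrow> Pp j (fst t) (fst (snd t)) (snd (snd t))"
    proof (cases "j < n")
      case True
      then obtain s V Z where "Pp j s V Z" using vertex_split[OF U[OF True] W[OF True] WU[OF True]] unfolding Pp_def by blast
      then show ?thesis by (intro exI[of _ "(s,V,Z)"]) simp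
    qed simp
  qed
  from choice[OF this] obtain g where g: "\<And>j. j < n \<Longrightarrow> Pp j (fst (g j)) (fst (snd (g j))) (snd (snd (g j)))" by blast
  define s where "s = (\<lambda>j. fst (g j))"
  define V where "V = (\<lambda>j. fst (snd (g j)))"
  define Z where "Z = (\<lambda>j. snd (snd (g j)))"
  have V: "\<And>j. j < n \<Longrightarrow> V j \<in> carrier_mat (dimv M j) (s j)" using g unfolding Pp_def s_def V_def Z_def by blast
  have Z: "\<And>j. j < n \<Longrightarrow> Z j \<in> carrier_mat (s j) (dimv M j)" using g unfolding Pp_def s_def V_def Z_def by blast
  have WV: "\<And>j. j < n \<Longrightarrow> W j * V j = 0\<^sub>m (c j) (s j)" using g unfolding Pp_def s_def V_def Z_def by blast
  have ZU: "\<And>j. j < n \<Longrightarrow> Z j * U j = 0\<^sub>m (s j) (c j)" using g unfolding Pp_def s_def V_def Z_def by blast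
  have ZV: "\<And>j. j < n \<Longrightarrow> Z j * V j = 1\<^sub>m (s j)" using g unfolding Pp_def s_def V_def Z_def by blast
  have UWVZ: "\<And>j. j < n \<Longrightarrow> U j * W j + V j * Z j = 1\<^sub>m (dimv M j)" using g unfolding Pp_def s_def V_def Z_def by blast
  have VZ: "\<And>j. j < n \<Longrightarrow> V j * Z j = 1\<^sub>m (dimv M j) - U j * W j" using g unfolding Pp_def s_def V_def Z_def by blast
  define D where "D = (\<lambda>j. Z (nxt n j) * arr M j * V j)"
  define X where "X = (c, C)"
  define Y where "Y = (s, D)"
  define T where "T = (\<lambda>j. four_block_mat (W j) (0\<^sub>m (c j) 0) (Z j) (0\<^sub>m (s j) 0))"
  define S where "S = (\<lambda>j. four_block_mat (U j) (V j) (0\<^sub>m 0 (c j)) (0\<^sub>m 0 (s j)))"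
  define FB where "FB = (\<lambda>j. four_block_mat (C j) (0\<^sub>m (c (nxt n j)) (s j)) (0\<^sub>m (s (nxt n j)) (c j)) (D j))"
  have nj: "\<And>j. j < n \<Longrightarrow> nxt n j < n" using nxt_lt n by simp
  have A: "\<And>j. j < n \<Longrightarrow> arr M j \<in> carrier_mat (dimv M (nxt n j)) (dimv M j)" using rep_arr[OF rep] by simp
  have D: "\<And>j. j < n \<Longrightarrow> D j \<in> carrier_mat (s (nxt n j)) (s j)"
    unfolding D_def using Z nj A V by (meson mult_carrier_mat)
  have T: "\<And>j. j < n \<Longrightarrow> T j \<in> carrier_mat (c j + s j) (dimv M j)"
    unfolding T_def using W Z by (metis add_0_right four_block_carrier_mat zero_carrier_mat)
  have S: "\<And>j. j < n \<Longrightarrow> S j \<in> carrier_mat (dimv M j) (c j + s j)"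
    unfolding S_def using U V by (metis add_0_right four_block_carrier_mat zero_carrier_mat)
  have FB: "\<And>j. j < n \<Longrightarrow> FB j \<in> carrier_mat (c (nxt n j) + s (nxt n j)) (c j + s j)"
    unfolding FB_def using C D by simp
  have TS: "T j * S j = 1\<^sub>m (c j + s j)" if j: "j < n" for j
  proof -
    have "T j * S j = four_block_mat (W j * U j + 0\<^sub>m (c j) 0 * 0\<^sub>m 0 (c j)) (W j * V j + 0\<^sub>m (c j) 0 * 0\<^sub>m 0 (s j))
      (Z j * U j + 0\<^sub>m (s j) 0 * 0\<^sub>m 0 (c j)) (Z j * V j + 0\<^sub>m (s j) 0 * 0\<^sub>m 0 (s j))"
      unfolding T_def S_def by (rule mult_four_block_mat[OF W[OF j] zero_carrier_mat Z[OF j] zero_carrier_mat U[OF j] V[OF j] zero_carrier_mat zero_carrier_mat])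
    then show ?thesis using WU[OF j] WV[OF j] ZU[OF j] ZV[OF j] by simp
  qed
  have ST: "S j * T j = 1\<^sub>m (dimv M j)" if j: "j < n" for j
  proof -
    have "S j * T j = four_block_mat (U j * W j + V j * Z j) (U j * 0\<^sub>m (c j) 0 + V j * 0\<^sub>m (s j) 0)
      (0\<^sub>m 0 (c j) * W j + 0\<^sub>m 0 (s j) * Z j) (0\<^sub>m 0 (c j) * 0\<^sub>m (c j) 0 + 0\<^sub>m 0 (s j) * 0\<^sub>m (s j) 0)"
      unfolding T_def S_def by (rule mult_four_block_mat[OF U[OF j] V[OF j] zero_carrier_mat zero_carrier_mat W[OF j] zero_carrier_mat Z[OF j] zero_carrier_mat])
    also have "\<dots> = four_block_mat (1\<^sub>m (dimv M j)) (0\<^sub>m (dimv M j) 0) (0\<^sub>m 0 (dimv M j)) (1\<^sub>m 0)"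
      using UWVZ[OF j] U[OF j] V[OF j] W[OF j] Z[OF j] by (auto intro!: cong_four_block_mat eq_matI)
    finally show ?thesis by simp
  qed
  have hom1: "FB j * T j = T (nxt n j) * arr M j" if j: "j < n" for j
  proof -
    let ?j = "nxt n j"
    have L: "FB j * T j = four_block_mat (C j * W j + 0\<^sub>m (c ?j) (s j) * Z j) (C j * 0\<^sub>m (c j) 0 + 0\<^sub>m (c ?j) (s j) * 0\<^sub>m (s j) 0)
      (0\<^sub>m (s ?j) (c j) * W j + D j * Z j) (0\<^sub>m (s ?j) (c j) * 0\<^sub>m (c j) 0 + D j * 0\<^sub>m (s j) 0)"
      unfolding FB_def T_def by (rule mult_four_block_mat[OF C[OF j] zero_carrier_mat zero_carrier_mat D[OF j] W[OF j] zero_carrier_mat Z[OF j] zero_carrier_mat])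
    have R: "T ?j * arr M j = four_block_mat (W ?j * arr M j) (0\<^sub>m (c ?j) 0) (Z ?j * arr M j) (0\<^sub>m (s ?j) 0)"
      unfolding T_def by (rule stack_mult[OF W[OF nj[OF j]] Z[OF nj[OF j]] A[OF j]])
    have DZ: "D j * Z j = Z ?j * arr M j"
    proof -
      have ZA: "Z ?j * arr M j \<in> carrier_mat (s ?j) (dimv M j)" using Z[OF nj[OF j]] A[OF j] by simp
      have "D j * Z j = (Z ?j * arr M j) * (V j * Z j)" unfolding D_def using ZA V[OF j] Z[OF j] by (simp add: assoc_mult_mat)
      also have "\<dots> = (Z ?j * arr M j) * 1\<^sub>m (dimv M j) - (Z ?j * arr M j) * (U j * W j)"
        unfolding VZ[OF j] by (rule mult_minus_distrib_mat[OF ZA one_carrier_mat]) (use U[OF j] W[OF j] in simp)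
      also have "(Z ?j * arr M j) * (U j * W j) = Z ?j * (arr M j * U j) * W j"
      proof -
        have e1: "(Z ?j * arr M j) * (U j * W j) = Z ?j * (arr M j * (U j * W j))"
          by (rule assoc_mult_mat[OF Z[OF nj[OF j]] A[OF j] mult_carrier_mat[OF U[OF j] W[OF j]]])
        have e2: "Z ?j * (arr M j * U j) * W j = Z ?j * ((arr M j * U j) * W j)"
          by (rule assoc_mult_mat[OF Z[OF nj[OF j]] mult_carrier_mat[OF A[OF j] U[OF j]] W[OF j]])
        have e3: "(arr M j * U j) * W j = arr M j * (U j * W j)" by (rule assoc_mult_mat[OF A[OF j] U[OF j] W[OF j]])
        show ?thesis using e1 e2 e3 by simp
      qed
      also have "\<dots> = (Z ?j * U ?j) * C j * W j" unfolding AU[OF j]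
        using assoc_mult_mat[OF Z[OF nj[OF j]] U[OF nj[OF j]] C[OF j]] by simp
      also have "\<dots> = 0\<^sub>m (s ?j) (dimv M j)" unfolding ZU[OF nj[OF j]] using C[OF j] W[OF j] by simp
      finally show ?thesis using ZA right_mult_one_mat[OF ZA] by (simp add: mat_minus_zero)
    qed
    show ?thesis unfolding L R DZ WA[OF j, symmetric]
      using W[OF j] Z[OF j] C[OF j] D[OF j] W[OF nj[OF j]] Z[OF nj[OF j]] A[OF j] by simp
  qed
  have hom2: "arr M j * S j = S (nxt n j) * FB j" if j: "j < n" for j
  proof -
    let ?j = "nxt n j"
    have L: "arr M j * S j = four_block_mat (arr M j * U j) (arr M j * V j) (0\<^sub>m 0 (c j)) (0\<^sub>m 0 (s j))"
      unfolding S_def by (rule mult_stack[OF A[OF j] U[OF j] V[OF j]])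
    have R: "S ?j * FB j = four_block_mat (U ?j * C j + V ?j * 0\<^sub>m (s ?j) (c j)) (U ?j * 0\<^sub>m (c ?j) (s j) + V ?j * D j)
       (0\<^sub>m 0 (c ?j) * C j + 0\<^sub>m 0 (s ?j) * 0\<^sub>m (s ?j) (c j)) (0\<^sub>m 0 (c ?j) * 0\<^sub>m (c ?j) (s j) + 0\<^sub>m 0 (s ?j) * D j)"
      unfolding S_def FB_def by (rule mult_four_block_mat[OF U[OF nj[OF j]] V[OF nj[OF j]] zero_carrier_mat zero_carrier_mat C[OF j] zero_carrier_mat zero_carrier_mat D[OF j]])
    have VD: "V ?j * D j = arr M j * V j"
    proof -
      have AV: "arr M j * V j \<in> carrier_mat (dimv M ?j) (s j)" using A[OF j] V[OF j] by simp
      have "V ?j * D j = (V ?j * Z ?j) * (arr M j * V j)" unfolding D_def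
        using assoc_mult_mat[OF Z[OF nj[OF j]] A[OF j] V[OF j]] assoc_mult_mat[OF V[OF nj[OF j]] Z[OF nj[OF j]] AV] by simp
      also have "\<dots> = 1\<^sub>m (dimv M ?j) * (arr M j * V j) - (U ?j * W ?j) * (arr M j * V j)"
        unfolding VZ[OF nj[OF j]] by (rule minus_mult_distrib_mat[OF one_carrier_mat _ AV]) (use U[OF nj[OF j]] W[OF nj[OF j]] in simp)
      also have "(U ?j * W ?j) * (arr M j * V j) = U ?j * ((W ?j * arr M j) * V j)"
      proof -
        have e1: "(U ?j * W ?j) * (arr M j * V j) = U ?j * (W ?j * (arr M j * V j))"
          by (rule assoc_mult_mat[OF U[OF nj[OF j]] W[OF nj[OF j]] AV])
        have e2: "(W ?j * arr M j) * V j = W ?j * (arr M j * V j)"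
          by (rule assoc_mult_mat[OF W[OF nj[OF j]] A[OF j] V[OF j]])
        show ?thesis using e1 e2 by simp
      qed
      also have "\<dots> = U ?j * (C j * (W j * V j))" unfolding WA[OF j]
        using assoc_mult_mat[OF C[OF j] W[OF j] V[OF j]] by simp
      also have "\<dots> = 0\<^sub>m (dimv M ?j) (s j)" unfolding WV[OF j] using U[OF nj[OF j]] C[OF j] by simp
      finally show ?thesis using AV left_mult_one_mat[OF AV] by (simp add: mat_minus_zero)
    qed
    show ?thesis unfolding L R VD AU[OF j]
      using U[OF j] V[OF j] C[OF j] D[OF j] U[OF nj[OF j]] V[OF nj[OF j]] A[OF j] by simp
  qed
  have repXq: "\<And>j. j < n \<Longrightarrow> arr X j \<in> carrier_mat (dimv X (nxt n j)) (dimv X j)" unfolding X_def using C by simp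
  have repYq: "\<And>j. j < n \<Longrightarrow> arr Y j \<in> carrier_mat (dimv Y (nxt n j)) (dimv Y j)" unfolding Y_def using D by simp
  have paths: "T ((j+m) mod n) * pathmat n M j m * S j = four_block_mat (pathmat n X j m)
      (0\<^sub>m (c ((j+m) mod n)) (s j)) (0\<^sub>m (s ((j+m) mod n)) (c j)) (pathmat n Y j m)" if j: "j < n" for j m
  proof (induction m)
    case 0
    show ?case using TS[OF j] T[OF j] j unfolding X_def Y_def by simp
  next
    case (Suc m)
    let ?q = "(j+m) mod n"
    have q: "?q < n" using n by simp
    have q': "nxt n ?q = (j + Suc m) mod n" using nxt_mod n by simp
    have PM: "pathmat n M j m \<in> carrier_mat (dimv M ?q) (dimv M j)" using pathmat_carrier[OF rep n j] by simp
    have PX: "pathmat n X j m \<in> carrier_mat (c ?q) (c j)" using pathmat_carrier_q[OF repXq n j, of m] unfolding X_def by simp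
    have PY: "pathmat n Y j m \<in> carrier_mat (s ?q) (s j)" using pathmat_carrier_q[OF repYq n j, of m] unfolding Y_def by simp
    have "T (nxt n ?q) * pathmat n M j (Suc m) * S j = ((T (nxt n ?q) * arr M ?q) * pathmat n M j m) * S j"
      using T[OF nj[OF q]] A[OF q] PM by (simp add: assoc_mult_mat)
    also have "\<dots> = ((FB ?q * T ?q) * pathmat n M j m) * S j" unfolding hom1[OF q] ..
    also have "\<dots> = FB ?q * (T ?q * pathmat n M j m * S j)"
      using assoc_mult_mat[OF FB[OF q] T[OF q] PM] assoc_mult_mat[OF FB[OF q] mult_carrier_mat[OF T[OF q] PM] S[OF j]] by simp
    also have "\<dots> = FB ?q * four_block_mat (pathmat n X j m) (0\<^sub>m (c ?q) (s j)) (0\<^sub>m (s ?q) (c j)) (pathmat n Y j m)"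
      unfolding Suc ..
    also have "\<dots> = four_block_mat (C ?q * pathmat n X j m + 0\<^sub>m (c (nxt n ?q)) (s ?q) * 0\<^sub>m (s ?q) (c j))
        (C ?q * 0\<^sub>m (c ?q) (s j) + 0\<^sub>m (c (nxt n ?q)) (s ?q) * pathmat n Y j m)
        (0\<^sub>m (s (nxt n ?q)) (c ?q) * pathmat n X j m + D ?q * 0\<^sub>m (s ?q) (c j))
        (0\<^sub>m (s (nxt n ?q)) (c ?q) * 0\<^sub>m (c ?q) (s j) + D ?q * pathmat n Y j m)"
      unfolding FB_def by (rule mult_four_block_mat[OF C[OF q] zero_carrier_mat zero_carrier_mat D[OF q] PX zero_carrier_mat zero_carrier_mat PY])
    also have "\<dots> = four_block_mat (pathmat n X j (Suc m)) (0\<^sub>m (c (nxt n ?q)) (s j)) (0\<^sub>m (s (nxt n ?q)) (c j)) (pathmat n Y j (Suc m))"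
      using C[OF q] D[OF q] PX PY unfolding X_def Y_def by simp
    finally show ?case unfolding q' .
  qed
  have pz: "pathmat n X j (Suc l) = 0\<^sub>m (dimv X ((j + Suc l) mod n)) (dimv X j) \<and>
            pathmat n Y j (Suc l) = 0\<^sub>m (dimv Y ((j + Suc l) mod n)) (dimv Y j)" if j: "j < n" for j
  proof -
    let ?q = "(j + Suc l) mod n"
    have q: "?q < n" using n by simp
    have "pathmat n M j (Suc l) = 0\<^sub>m (dimv M ?q) (dimv M j)" using rep j unfolding is_rep_def by blast
    then have E0: "T ?q * pathmat n M j (Suc l) * S j = 0\<^sub>m (c ?q + s ?q) (c j + s j)"
      using T[OF q] S[OF j] by simp
    have E: "four_block_mat (pathmat n X j (Suc l)) (0\<^sub>m (c ?q) (s j)) (0\<^sub>m (s ?q) (c j)) (pathmat n Y j (Suc l))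
        = 0\<^sub>m (c ?q + s ?q) (c j + s j)" using E0 unfolding paths[OF j, of "Suc l"] .
    have PX: "pathmat n X j (Suc l) \<in> carrier_mat (c ?q) (c j)" using pathmat_carrier_q[OF repXq n j, of "Suc l"] unfolding X_def by simp
    have PY: "pathmat n Y j (Suc l) \<in> carrier_mat (s ?q) (s j)" using pathmat_carrier_q[OF repYq n j, of "Suc l"] unfolding Y_def by simp
    show ?thesis using four_block_zero_parts[OF PX PY E] unfolding X_def Y_def by simp
  qed
  have repX: "is_rep n l X" unfolding is_rep_def using repXq pz by blast
  have repY: "is_rep n l Y" unfolding is_rep_def using repYq pz by blast
  have nX: "nonzero_rep n X" unfolding nonzero_rep_def X_def using nzX by simp
  have nY: "nonzero_rep n Y"
  proof (rule ccontr)
    assume "\<not> nonzero_rep n Y"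
    then have s0: "\<And>j. j < n \<Longrightarrow> s j = 0" unfolding nonzero_rep_def Y_def by auto
    obtain j where j: "j < n" "U j * W j \<noteq> 1\<^sub>m (dimv M j)" using ne by blast
    have "V j * Z j = 0\<^sub>m (dimv M j) (dimv M j)" using V[OF j(1)] Z[OF j(1)] s0[OF j(1)] by (simp add: mult_empty)
    then show False using UWVZ[OF j(1)] j(2) U[OF j(1)] W[OF j(1)] by simp
  qed
  have dsX: "dsum n X Y = (\<lambda>j. c j + s j, FB)" unfolding dsum_def X_def Y_def FB_def by simp
  have iso: "rep_iso n M (dsum n X Y)"
    unfolding rep_iso_def is_hom_def dsX using T S hom1 hom2 TS ST by (intro exI[of _ T] exI[of _ S]) auto
  show ?thesis using repX repY nX nY iso by blast
qed

end


lemma structure_thm: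
  fixes M :: "'k::field rep"
  assumes indec: "indecomposable n l M" and n: "1 \<le> n"
  shows "\<exists>i x t q. wdat n l M i x (Suc t) q t \<and> (\<forall>j<n. Um n M i x (Suc t) j * Wm n M i q (Suc t) j = 1\<^sub>m (dimv M j))"
proof -
  have rep: "is_rep n l M" and nz: "nonzero_rep n M" using indec unfolding indecomposable_def by auto
  obtain t i x where i: "i < n" and x: "x \<in> carrier_vec (dimv M i)"
    and nzx: "pathmat n M i t *\<^sub>v x \<noteq> 0\<^sub>v (dimv M ((i+t) mod n))" and ml: "maxlen n M (Suc t)"
    using maxlen_exists[OF rep n nz] by blast
  obtain q where q: "q \<in> carrier_vec (dimv M ((i+t) mod n))" "q \<bullet> (pathmat n M i t *\<^sub>v x) = 1"
    "\<And>s. 1 \<le> s \<Longrightarrow> s * n \<le> t \<Longrightarrow> q \<bullet> (pathmat n M i (t - s*n) *\<^sub>v x) = 0"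
    using functional_exists[OF rep n i x nzx ml] by blast
  have xa: "pathmat n M i (Suc t) *\<^sub>v x = 0\<^sub>v (dimv M ((i + Suc t) mod n))"
    by (rule act_high[OF rep n i x ml]) simp
  interpret wdat n l M i x "Suc t" q t
    by (unfold_locales) (use rep n i x xa q ml in auto)
  interpret splitdat n l M "cnt n i (Suc t)" "Um n M i x (Suc t)" "Wm n M i q (Suc t)" "Cm n i (Suc t)"
    by (unfold_locales) (use rep n U_carrier W_carrier Cm_carrier WU AU WA in auto)
  have nzX: "\<exists>j<n. 0 < cnt n i (Suc t) j" using cnt_pos_self[OF n i] i by auto
  have "\<forall>j<n. Um n M i x (Suc t) j * Wm n M i q (Suc t) j = 1\<^sub>m (dimv M j)"
  proof (rule ccontr)
    assume "\<not> ?thesis"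
    then have "\<exists>j<n. Um n M i x (Suc t) j * Wm n M i q (Suc t) j \<noteq> 1\<^sub>m (dimv M j)" by blast
    from decomp[OF nzX this] show False using indec unfolding indecomposable_def by blast
  qed
  then show ?thesis using wdat_axioms by blast
qed

locale cdat = wdat +
  assumes full: "\<And>j. j < n \<Longrightarrow> Um n M i x a j * Wm n M i q a j = 1\<^sub>m (dimv M j)"

lemma hom_U:
  assumes "is_rep n l A" "is_rep n l B" "is_hom n A B f" "1 \<le> n" "i < n" "x \<in> carrier_vec (dimv A i)" "j < n"
  shows "f j * Um n A i x a j = Um n B i (f i *\<^sub>v x) a j"
proof (rule eq_matI)
  have fj: "f j \<in> carrier_mat (dimv B j) (dimv A j)" and fi: "f i \<in> carrier_mat (dimv B i) (dimv A i)"
    using assms unfolding is_hom_def by auto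
  fix r k assume rk: "r < dim_row (Um n B i (f i *\<^sub>v x) a j)" "k < dim_col (Um n B i (f i *\<^sub>v x) a j)"
  then have r: "r < dimv B j" and k: "k < cnt n i a j" unfolding Um_def by auto
  let ?e = "exv n i j k"
  have ej: "(i + ?e) mod n = j" using exv_mod[OF assms(4,5,7)] .
  have PA: "pathmat n A i ?e \<in> carrier_mat (dimv A j) (dimv A i)" using pathmat_carrier[OF assms(1,4,5), of ?e] ej by simp
  have PB: "pathmat n B i ?e \<in> carrier_mat (dimv B j) (dimv B i)" using pathmat_carrier[OF assms(2,4,5), of ?e] ej by simp
  have hp: "f j * pathmat n A i ?e = pathmat n B i ?e * f i" using hom_path[OF assms(1-5), of ?e] ej by simp
  have "(f j * Um n A i x a j) $$ (r,k) = row (f j) r \<bullet> col (Um n A i x a j) k"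
    using fj r k unfolding Um_def by simp
  also have "\<dots> = (f j *\<^sub>v (pathmat n A i ?e *\<^sub>v x)) $ r"
  proof -
    have "col (Um n A i x a j) k = vec (dimv A j) (\<lambda>r. (pathmat n A i ?e *\<^sub>v x) $ r)"
      unfolding Um_def using k by (simp add: col_mat)
    also have "\<dots> = pathmat n A i ?e *\<^sub>v x" using PA assms(6) by (intro vec_index_id) auto
    finally show ?thesis using fj r by simp
  qed
  also have "f j *\<^sub>v (pathmat n A i ?e *\<^sub>v x) = pathmat n B i ?e *\<^sub>v (f i *\<^sub>v x)"
    using hp fj PA fi PB assms(6) by (metis assoc_mult_mat_vec)
  also have "(pathmat n B i ?e *\<^sub>v (f i *\<^sub>v x)) $ r = Um n B i (f i *\<^sub>v x) a j $$ (r,k)"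
    unfolding Um_def using r k by simp
  finally show "(f j * Um n A i x a j) $$ (r,k) = Um n B i (f i *\<^sub>v x) a j $$ (r,k)" .
qed (use assms in \<open>auto simp: Um_def is_hom_def\<close>)


lemma shm_id: "shm c c 0 = (1\<^sub>m c :: 'a::{zero,one} mat)"
  unfolding shm_def by (intro eq_matI) auto

lemma CG:
  assumes n: "1 \<le> n" and i: "i < n" and j: "j < n" and ab: "a \<le> b"
  shows "Cm n i a j * shm (cnt n i a j) (cnt n i b j) 0 = (shm (cnt n i a (nxt n j)) (cnt n i b (nxt n j)) 0 :: 'k::field mat) * Cm n i b j"
proof -
  let ?d = "dl n i j"
  have L: "Cm n i a j * shm (cnt n i a j) (cnt n i b j) 0 = (mat (cnt n i a (nxt n j)) (cnt n i b j)
     (\<lambda>(k1,k2). if k1 = k2 + 0 + ?d \<and> k2 + 0 < cnt n i a j then 1 else 0) :: 'k mat)"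
    unfolding Cm_def by (rule shm_mult)
  have R: "(shm (cnt n i a (nxt n j)) (cnt n i b (nxt n j)) 0 :: 'k mat) * Cm n i b j = mat (cnt n i a (nxt n j)) (cnt n i b j)
     (\<lambda>(k1,k2). if k1 = k2 + ?d + 0 \<and> k2 + ?d < cnt n i b (nxt n j) then 1 else 0)"
    unfolding Cm_def by (rule shm_mult)
  have eqv: "(k1 = k2 + ?d \<and> k2 < cnt n i a j) \<longleftrightarrow> (k1 = k2 + ?d \<and> k2 + ?d < cnt n i b (nxt n j))"
    if k1: "k1 < cnt n i a (nxt n j)" for k1 k2
  proof (cases "k1 = k2 + ?d")
    case True
    have "exv n i (nxt n j) k1 < a" using cnt_iff[OF n] k1 by simp
    moreover have "exv n i (nxt n j) k1 = exv n i j k2 + 1" using exv_shift[OF n i j, of k1 k2] True by simp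
    ultimately have "exv n i j k2 + 1 < a" by simp
    then have "k2 < cnt n i a j" using cnt_iff[OF n] by simp
    moreover have "k2 + ?d < cnt n i b (nxt n j)" using True k1 cnt_mono[OF n ab, of i "nxt n j"] by simp
    ultimately show ?thesis using True by simp
  qed simp
  show ?thesis unfolding L R using eqv by (intro eq_matI) auto
qed

lemma hmap:
  fixes N M :: "'k::field rep"
  assumes src: "wdat n l N i y b q t" and tgt: "udat n l M i x a" and ab: "a \<le> b" and a1: "1 \<le> a"
  shows "is_hom n N M (\<lambda>j. Um n M i x a j * shm (cnt n i a j) (cnt n i b j) 0 * Wm n N i q b j)"
    and "(Um n M i x a i * shm (cnt n i a i) (cnt n i b i) 0 * Wm n N i q b i) *\<^sub>v y = x"
proof -
  interpret S: wdat n l N i y b q t by (rule src)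
  interpret T: udat n l M i x a by (rule tgt)
  let ?G = "\<lambda>j. shm (cnt n i a j) (cnt n i b j) 0 :: 'k mat"
  let ?h = "\<lambda>j. Um n M i x a j * ?G j * Wm n N i q b j"
  have n: "1 \<le> n" and i: "i < n" using S.n S.i .
  have hc: "?h j \<in> carrier_mat (dimv M j) (dimv N j)" if j: "j < n" for j
    using mult_carrier_mat[OF mult_carrier_mat[OF T.U_carrier[OF j] shm_carrier] S.W_carrier[OF j]] .
  have comm: "arr M j * ?h j = ?h (nxt n j) * arr N j" if j: "j < n" for j
  proof -
    let ?j = "nxt n j"
    have nj: "?j < n" using nxt_lt n by simp
    note UM = T.U_carrier[OF j] and UM' = T.U_carrier[OF nj]
    note WN = S.W_carrier[OF j] and WN' = S.W_carrier[OF nj]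
    note AM = rep_arr[OF T.rep j] and AN = rep_arr[OF S.rep j]
    have G: "?G j \<in> carrier_mat (cnt n i a j) (cnt n i b j)" by simp
    have G': "?G ?j \<in> carrier_mat (cnt n i a ?j) (cnt n i b ?j)" by simp
    have Ca: "Cm n i a j \<in> carrier_mat (cnt n i a ?j) (cnt n i a j)" by simp
    have Cb: "Cm n i b j \<in> carrier_mat (cnt n i b ?j) (cnt n i b j)" by simp
    have "arr M j * ?h j = (arr M j * Um n M i x a j) * (?G j * Wm n N i q b j)"
      using assoc_mult_mat[OF AM UM mult_carrier_mat[OF G WN]] assoc_mult_mat[OF UM G WN] by simp
    also have "\<dots> = Um n M i x a ?j * ((Cm n i a j * ?G j) * Wm n N i q b j)"
      unfolding T.AU[OF j]
      using assoc_mult_mat[OF UM' Ca mult_carrier_mat[OF G WN]] assoc_mult_mat[OF Ca G WN] by simp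
    also have "\<dots> = Um n M i x a ?j * (?G ?j * (Cm n i b j * Wm n N i q b j))"
      unfolding CG[OF n i j ab] using assoc_mult_mat[OF G' Cb WN] by simp
    also have "\<dots> = ?h ?j * arr N j"
      unfolding S.WA[OF j, symmetric]
      using assoc_mult_mat[OF G' WN' AN] assoc_mult_mat[OF UM' G' mult_carrier_mat[OF WN' AN]]
        assoc_mult_mat[OF mult_carrier_mat[OF UM' G'] WN' AN] by simp
    finally show ?thesis .
  qed
  show "is_hom n N M ?h" unfolding is_hom_def using hc comm by blast
  have c0: "0 < cnt n i a i" using cnt_pos_self[OF n i a1] .
  have cab: "cnt n i a i \<le> cnt n i b i" using cnt_mono[OF n ab] .
  have "Wm n N i q b i *\<^sub>v y = unit_vec (cnt n i b i) 0" by (rule S.Wx)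
  moreover have "?G i *\<^sub>v unit_vec (cnt n i b i) 0 = unit_vec (cnt n i a i) 0"
    unfolding shm_mult_vec[OF unit_vec_carrier] using cab c0 by (intro eq_vecI) auto
  moreover have "Um n M i x a i *\<^sub>v unit_vec (cnt n i a i) 0 = x"
    using mat_vec_unit[OF T.U_carrier[OF i] c0] T.U_col[OF i c0] exv_self[OF n i, of 0] T.x by simp
  moreover have "?h i *\<^sub>v y = (Um n M i x a i * ?G i) *\<^sub>v (Wm n N i q b i *\<^sub>v y)"
    by (rule assoc_mult_mat_vec[OF mult_carrier_mat[OF T.U_carrier[OF i] shm_carrier] S.W_carrier[OF i] S.x])
  moreover have "(Um n M i x a i * ?G i) *\<^sub>v unit_vec (cnt n i b i) 0 = Um n M i x a i *\<^sub>v (?G i *\<^sub>v unit_vec (cnt n i b i) 0)"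
    by (rule assoc_mult_mat_vec[OF T.U_carrier[OF i] shm_carrier unit_vec_carrier])
  ultimately show "?h i *\<^sub>v y = x" by simp
qed


lemma hom_comp:
  assumes "is_rep n l A" "is_rep n l B" "is_rep n l C" "is_hom n A B f" "is_hom n B C g" "1 \<le> n"
  shows "is_hom n A C (\<lambda>j. g j * f j)"
  unfolding is_hom_def
proof (intro conjI allI impI)
  fix j assume j: "j < n"
  have f: "f j \<in> carrier_mat (dimv B j) (dimv A j)" and g: "g j \<in> carrier_mat (dimv C j) (dimv B j)"
    using assms j unfolding is_hom_def by auto
  then show "g j * f j \<in> carrier_mat (dimv C j) (dimv A j)" by simp
  have nj: "nxt n j < n" using nxt_lt assms by simp
  have f': "f (nxt n j) \<in> carrier_mat (dimv B (nxt n j)) (dimv A (nxt n j))" and g': "g (nxt n j) \<in> carrier_mat (dimv C (nxt n j)) (dimv B (nxt n j))"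
    using assms nj unfolding is_hom_def by auto
  note aA = rep_arr[OF assms(1) j] and aB = rep_arr[OF assms(2) j] and aC = rep_arr[OF assms(3) j]
  have cf: "arr B j * f j = f (nxt n j) * arr A j" and cg: "arr C j * g j = g (nxt n j) * arr B j"
    using assms j unfolding is_hom_def by auto
  have "arr C j * (g j * f j) = (arr C j * g j) * f j" using assoc_mult_mat[OF aC g f] by simp
  also have "\<dots> = g (nxt n j) * (arr B j * f j)" unfolding cg using assoc_mult_mat[OF g' aB f] by simp
  also have "\<dots> = (g (nxt n j) * f (nxt n j)) * arr A j" unfolding cf using assoc_mult_mat[OF g' f' aA] by simp
  finally show "arr C j * (g j * f j) = g (nxt n j) * f (nxt n j) * arr A j" .
qed

lemma full_projective:
  fixes N :: "'k::field rep"
  assumes cd: "cdat n l N i y (Suc l) q l"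
  shows "is_projective n l N"
proof -
  interpret cdat n l N i y "Suc l" q l by (rule cd)
  show ?thesis unfolding is_projective_def
  proof (intro conjI allI impI)
    show "is_rep n l N" by (rule rep)
    fix X Y :: "'k rep" and g h
    assume H: "is_rep n l X \<and> is_rep n l Y \<and> is_surj_hom n X Y g \<and> is_hom n N Y h"
    then have rX: "is_rep n l X" and rY: "is_rep n l Y" and gh: "is_hom n X Y g" and hh: "is_hom n N Y h"
      and surj: "\<And>j v. j < n \<Longrightarrow> v \<in> carrier_vec (dimv Y j) \<Longrightarrow> \<exists>w\<in>carrier_vec (dimv X j). g j *\<^sub>v w = v"
      unfolding is_surj_hom_def by auto
    have hi: "h i \<in> carrier_mat (dimv Y i) (dimv N i)" using hh i unfolding is_hom_def by auto
    have hv: "h i *\<^sub>v y \<in> carrier_vec (dimv Y i)" using hi x by simp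
    obtain w where w: "w \<in> carrier_vec (dimv X i)" "g i *\<^sub>v w = h i *\<^sub>v y" using surj[OF i hv] by blast
    have ud: "udat n l X i w (Suc l)"
      by unfold_locales (use rX n i w pathmat_zero[OF rX n i, of "Suc l"] in auto)
    define h' where "h' = (\<lambda>j. Um n X i w (Suc l) j * shm (cnt n i (Suc l) j) (cnt n i (Suc l) j) 0 * Wm n N i q (Suc l) j)"
    have hom': "is_hom n N X h'" using hmap(1)[OF wdat_axioms ud le_refl] unfolding h'_def by simp
    have "g j * h' j = h j" if j: "j < n" for j
    proof -
      have gj: "g j \<in> carrier_mat (dimv Y j) (dimv X j)" using gh j unfolding is_hom_def by auto
      have hj: "h j \<in> carrier_mat (dimv Y j) (dimv N j)" using hh j unfolding is_hom_def by auto
      note UX = udat.U_carrier[OF ud j]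
      have "g j * h' j = (g j * Um n X i w (Suc l) j) * Wm n N i q (Suc l) j"
        unfolding h'_def shm_id using UX W_carrier[OF j] gj by (simp add: assoc_mult_mat)
      also have "g j * Um n X i w (Suc l) j = Um n Y i (h i *\<^sub>v y) (Suc l) j"
        using hom_U[OF rX rY gh n i w(1) j] w(2) by simp
      also have "\<dots> = h j * Um n N i y (Suc l) j" using hom_U[OF rep rY hh n i x j] by simp
      also have "h j * Um n N i y (Suc l) j * Wm n N i q (Suc l) j = h j * (Um n N i y (Suc l) j * Wm n N i q (Suc l) j)"
        using assoc_mult_mat[OF hj U_carrier[OF j] W_carrier[OF j]] .
      also have "\<dots> = h j" unfolding full[OF j] using hj by simp
      finally show ?thesis .
    qed
    then show "\<exists>h'. is_hom n N X h' \<and> (\<forall>i<n. g i * h' i = h i)" using hom' by blast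
  qed
qed

definition Cyc :: "nat \<Rightarrow> nat \<Rightarrow> nat \<Rightarrow> 'k::field rep" where
  "Cyc n i L = (\<lambda>j. cnt n i L j, \<lambda>j. Cm n i L j)"

lemma Cyc_path:
  assumes n: "1 \<le> n" and i: "i < n" and j: "j < n"
  shows "pathmat n (Cyc n i L :: 'k::field rep) j m = mat (cnt n i L ((j+m) mod n)) (cnt n i L j)
     (\<lambda>(k1,k2). if exv n i ((j+m) mod n) k1 = exv n i j k2 + m then 1 else 0)"
proof (induction m)
  case 0
  show ?case unfolding Cyc_def using j exv_inj[OF n] by (intro eq_matI) auto
next
  case (Suc m)
  let ?q = "(j+m) mod n"
  have q: "?q < n" using n by simp
  have q': "nxt n ?q = (j + Suc m) mod n" using nxt_mod n by simp
  let ?P = "mat (cnt n i L ?q) (cnt n i L j) (\<lambda>(k1,k2). if exv n i ?q k1 = exv n i j k2 + m then 1 else (0::'k))"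
  have "pathmat n (Cyc n i L :: 'k rep) j (Suc m) = arr (Cyc n i L :: 'k rep) ?q * pathmat n (Cyc n i L :: 'k rep) j m" by simp
  also have "\<dots> = Cm n i L ?q * ?P" unfolding Suc by (simp add: Cyc_def)
  also have "\<dots> = mat (cnt n i L (nxt n ?q)) (cnt n i L j) (\<lambda>(k1,k2). if dl n i ?q \<le> k1 \<and> k1 - dl n i ?q < cnt n i L ?q then ?P $$ (k1 - dl n i ?q, k2) else 0)"
    unfolding Cm_def by (rule mult_shm_left) simp
  also have "\<dots> = mat (cnt n i L ((j + Suc m) mod n)) (cnt n i L j)
     (\<lambda>(k1,k2). if exv n i ((j + Suc m) mod n) k1 = exv n i j k2 + Suc m then 1 else 0)"
  proof (rule eq_matI)
    fix k1 k2 assume kk: "k1 < dim_row (mat (cnt n i L ((j + Suc m) mod n)) (cnt n i L j)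
     (\<lambda>(k1,k2). if exv n i ((j + Suc m) mod n) k1 = exv n i j k2 + Suc m then 1 else (0::'k)))"
      "k2 < dim_col (mat (cnt n i L ((j + Suc m) mod n)) (cnt n i L j)
     (\<lambda>(k1,k2). if exv n i ((j + Suc m) mod n) k1 = exv n i j k2 + Suc m then 1 else (0::'k)))"
    then have k1: "k1 < cnt n i L (nxt n ?q)" and k2: "k2 < cnt n i L j" using q' by auto
    show "mat (cnt n i L (nxt n ?q)) (cnt n i L j) (\<lambda>(k1,k2). if dl n i ?q \<le> k1 \<and> k1 - dl n i ?q < cnt n i L ?q then ?P $$ (k1 - dl n i ?q, k2) else 0) $$ (k1,k2)
      = mat (cnt n i L ((j + Suc m) mod n)) (cnt n i L j) (\<lambda>(k1,k2). if exv n i ((j + Suc m) mod n) k1 = exv n i j k2 + Suc m then 1 else 0) $$ (k1,k2)"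
    proof (cases "dl n i ?q \<le> k1")
      case True
      have sh: "exv n i (nxt n ?q) k1 = exv n i ?q (k1 - dl n i ?q) + 1" using exv_shift[OF n i q, of k1 "k1 - dl n i ?q"] True by simp
      have lt: "k1 - dl n i ?q < cnt n i L ?q" using cnt_iff[OF n] k1 sh by simp
      show ?thesis using True lt k1 k2 sh q' by simp
    next
      case False
      then have "k1 = 0" "nxt n ?q = i" unfolding dl_def by (auto split: if_splits)
      then have "exv n i (nxt n ?q) k1 = 0" using exv_self[OF n i] by simp
      then show ?thesis using False k1 k2 q' by simp
    qed
  qed (use q' in auto)
  finally show ?case .
qed

lemma Cyc_rep:
  assumes n: "1 \<le> n" and i: "i < n"
  shows "is_rep n l (Cyc n i (Suc l) :: 'k::field rep)"
  unfolding is_rep_def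
proof (intro conjI allI impI)
  fix j assume j: "j < n"
  show "arr (Cyc n i (Suc l) :: 'k rep) j \<in> carrier_mat (dimv (Cyc n i (Suc l) :: 'k rep) (nxt n j)) (dimv (Cyc n i (Suc l) :: 'k rep) j)"
    unfolding Cyc_def by simp
  show "pathmat n (Cyc n i (Suc l) :: 'k rep) j (Suc l) = 0\<^sub>m (dimv (Cyc n i (Suc l) :: 'k rep) ((j + Suc l) mod n)) (dimv (Cyc n i (Suc l) :: 'k rep) j)"
    unfolding Cyc_path[OF n i j]
  proof (rule eq_matI)
    fix k1 k2 assume kk: "k1 < dim_row (0\<^sub>m (dimv (Cyc n i (Suc l) :: 'k rep) ((j + Suc l) mod n)) (dimv (Cyc n i (Suc l) :: 'k rep) j))"
      "k2 < dim_col (0\<^sub>m (dimv (Cyc n i (Suc l) :: 'k rep) ((j + Suc l) mod n)) (dimv (Cyc n i (Suc l) :: 'k rep) j))"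
    then have "exv n i ((j + Suc l) mod n) k1 < Suc l" using cnt_iff[OF n] unfolding Cyc_def by simp
    then show "mat (cnt n i (Suc l) ((j + Suc l) mod n)) (cnt n i (Suc l) j)
      (\<lambda>(k1,k2). if exv n i ((j + Suc l) mod n) k1 = exv n i j k2 + Suc l then 1 else 0) $$ (k1,k2) = 
      (0\<^sub>m (dimv (Cyc n i (Suc l) :: 'k rep) ((j + Suc l) mod n)) (dimv (Cyc n i (Suc l) :: 'k rep) j) :: 'k mat) $$ (k1,k2)"
      using kk unfolding Cyc_def by simp
  qed (auto simp: Cyc_def)
qed


lemma key:
  fixes S T :: "'k::field rep"
  assumes cd: "cdat n l T iT yT b qT tT"
    and rS: "is_rep n l S" and fh: "is_hom n S T f" and fp: "factors_through_projective n l S T f"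
    and j: "j < n" and s: "s \<in> carrier_vec (dimv S j)" and sa: "pathmat n S j a *\<^sub>v s = 0\<^sub>v (dimv S ((j+a) mod n))"
    and fs: "f j *\<^sub>v s = pathmat n T iT e *\<^sub>v yT" and ej: "(iT + e) mod n = j" and eb: "e < b" and ea: "e + a \<le> l"
  shows False
proof -
  interpret cdat n l T iT yT b qT tT by (rule cd)
  define L where "L = Suc l"
  define F where "F = (Cyc n iT L :: 'k rep)"
  have rF: "is_rep n l F" unfolding F_def L_def by (rule Cyc_rep[OF n i])
  have dF: "\<And>j. dimv F j = cnt n iT L j" unfolding F_def Cyc_def by simp
  have aF: "\<And>j. arr F j = Cm n iT L j" unfolding F_def Cyc_def by simp
  have tl: "tT \<le> l"
  proof (rule ccontr)
    assume "\<not> tT \<le> l"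
    then have "pathmat n T iT tT = 0\<^sub>m (dimv T ((iT + tT) mod n)) (dimv T iT)" using pathmat_zero[OF rep n i, of tT] by simp
    then have "pathmat n T iT tT *\<^sub>v yT = 0\<^sub>v (dimv T ((iT + tT) mod n))" using x by simp
    then show False using q1 q by simp
  qed
  have bL: "b \<le> L" unfolding L_def using tl at by simp
  define G where "G = (\<lambda>j. shm (cnt n iT b j) (cnt n iT L j) 0 :: 'k mat)"
  define g where "g = (\<lambda>j. Um n T iT yT b j * G j)"
  have gc: "g j \<in> carrier_mat (dimv T j) (dimv F j)" if "j < n" for j
    unfolding g_def G_def dF using U_carrier[OF that] by simp
  have ghom: "is_hom n F T g" unfolding is_hom_def
  proof (intro conjI allI impI)
    fix j assume j: "j < n"
    show "g j \<in> carrier_mat (dimv T j) (dimv F j)" by (rule gc[OF j])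
    have nj: "nxt n j < n" using nxt_lt n by simp
    note U1 = U_carrier[OF j] and U2 = U_carrier[OF nj] and A = rep_arr[OF rep j]
    have G1: "G j \<in> carrier_mat (cnt n iT b j) (cnt n iT L j)" unfolding G_def by simp
    have G2: "G (nxt n j) \<in> carrier_mat (cnt n iT b (nxt n j)) (cnt n iT L (nxt n j))" unfolding G_def by simp
    have Cb: "Cm n iT b j \<in> carrier_mat (cnt n iT b (nxt n j)) (cnt n iT b j)" by simp
    have CL: "Cm n iT L j \<in> carrier_mat (cnt n iT L (nxt n j)) (cnt n iT L j)" by simp
    have "arr T j * g j = (arr T j * Um n T iT yT b j) * G j" unfolding g_def using assoc_mult_mat[OF A U1 G1] by simp
    also have "\<dots> = Um n T iT yT b (nxt n j) * (Cm n iT b j * G j)" unfolding AU[OF j] using assoc_mult_mat[OF U2 Cb G1] by simp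
    also have "Cm n iT b j * G j = G (nxt n j) * Cm n iT L j" unfolding G_def by (rule CG[OF n i j bL])
    also have "Um n T iT yT b (nxt n j) * (G (nxt n j) * Cm n iT L j) = g (nxt n j) * arr F j"
      unfolding g_def aF using assoc_mult_mat[OF U2 G2 CL] by simp
    finally show "arr T j * g j = g (nxt n j) * arr F j" .
  qed
  have gsurj: "is_surj_hom n F T g" unfolding is_surj_hom_def
  proof (intro conjI ghom allI impI ballI)
    fix j and v :: "'k vec" assume j: "j < n" and v: "v \<in> carrier_vec (dimv T j)"
    define w where "w = shm (cnt n iT L j) (cnt n iT b j) 0 *\<^sub>v (Wm n T iT qT b j *\<^sub>v v)"
    have Wv: "Wm n T iT qT b j *\<^sub>v v \<in> carrier_vec (cnt n iT b j)" using W_carrier[OF j] v by simp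
    have w: "w \<in> carrier_vec (dimv F j)" unfolding w_def dF by (rule mult_mat_vec_carrier[OF shm_carrier Wv])
    have GG: "G j * shm (cnt n iT L j) (cnt n iT b j) 0 = 1\<^sub>m (cnt n iT b j)"
      unfolding G_def shm_mult using cnt_mono[OF n bL, of iT j] by (intro eq_matI) auto
    have G1: "G j \<in> carrier_mat (cnt n iT b j) (cnt n iT L j)" unfolding G_def by simp
    have H1: "shm (cnt n iT L j) (cnt n iT b j) 0 \<in> carrier_mat (cnt n iT L j) (cnt n iT b j)" by simp
    have e1: "g j *\<^sub>v w = Um n T iT yT b j *\<^sub>v (G j *\<^sub>v w)"
      unfolding g_def by (rule assoc_mult_mat_vec[OF U_carrier[OF j] G1 w[unfolded dF]])
    have e2: "G j *\<^sub>v w = (G j * shm (cnt n iT L j) (cnt n iT b j) 0) *\<^sub>v (Wm n T iT qT b j *\<^sub>v v)"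
      unfolding w_def by (rule assoc_mult_mat_vec[OF G1 H1 Wv, symmetric])
    have "g j *\<^sub>v w = Um n T iT yT b j *\<^sub>v ((G j * shm (cnt n iT L j) (cnt n iT b j) 0) *\<^sub>v (Wm n T iT qT b j *\<^sub>v v))"
      using e1 e2 by simp
    also have "\<dots> = (Um n T iT yT b j * Wm n T iT qT b j) *\<^sub>v v" unfolding GG using Wv U_carrier[OF j] W_carrier[OF j] v
      by (simp add: assoc_mult_mat_vec)
    also have "\<dots> = v" unfolding full[OF j] using v by simp
    finally show "\<exists>w\<in>carrier_vec (dimv F j). g j *\<^sub>v w = v" using w by blast
  qed
  obtain P a' b' where P: "is_projective n l P" and ha: "is_hom n S P a'" and hb: "is_hom n P T b'"
    and fab: "\<And>i. i < n \<Longrightarrow> f i = b' i * a' i"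
    using fp unfolding factors_through_projective_def by blast
  have rP: "is_rep n l P" using P unfolding is_projective_def by blast
  obtain h' where hh: "is_hom n P F h'" and gh: "\<And>i. i < n \<Longrightarrow> g i * h' i = b' i"
    using P rF rep gsurj hb unfolding is_projective_def by blast
  define u where "u = (\<lambda>i. h' i * a' i)"
  have hu: "is_hom n S F u" unfolding u_def by (rule hom_comp[OF rS rP rF ha hh n])
  define z where "z = u j *\<^sub>v s"
  have uj: "u j \<in> carrier_mat (dimv F j) (dimv S j)" using hu j unfolding is_hom_def by auto
  have zc: "z \<in> carrier_vec (cnt n iT L j)" unfolding z_def using uj s dF by simp
  let ?q = "(j + a) mod n"
  have qn: "?q < n" using n by simp
  have uq: "u ?q \<in> carrier_mat (dimv F ?q) (dimv S ?q)" using hu qn unfolding is_hom_def by auto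
  have PS: "pathmat n S j a \<in> carrier_mat (dimv S ?q) (dimv S j)" using pathmat_carrier[OF rS n j] by simp
  have PF: "pathmat n F j a \<in> carrier_mat (dimv F ?q) (dimv F j)" using pathmat_carrier[OF rF n j] by simp
  have Pz: "pathmat n F j a *\<^sub>v z = 0\<^sub>v (dimv F ?q)"
  proof -
    have "pathmat n F j a *\<^sub>v z = (pathmat n F j a * u j) *\<^sub>v s" unfolding z_def using PF uj s by (simp add: assoc_mult_mat_vec)
    also have "pathmat n F j a * u j = u ?q * pathmat n S j a" using hom_path[OF rS rF hu n j, of a] by simp
    also have "(u ?q * pathmat n S j a) *\<^sub>v s = u ?q *\<^sub>v (pathmat n S j a *\<^sub>v s)" using uq PS s by (simp add: assoc_mult_mat_vec)
    also have "\<dots> = 0\<^sub>v (dimv F ?q)" unfolding sa using uq by simp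
    finally show ?thesis .
  qed
  define k0 where "k0 = e div n"
  have ek0: "exv n iT j k0 = e" unfolding k0_def using exv_cong[OF n i j ej] by simp
  have k0b: "k0 < cnt n iT b j" using cnt_iff[OF n] ek0 eb by simp
  have k0L: "k0 < cnt n iT L j" using cnt_iff[OF n] ek0 eb bL by simp
  define k1 where "k1 = (e + a) div n"
  have eq1: "(iT + (e + a)) mod n = ?q" using ej by (metis add.assoc mod_add_left_eq)
  have ek1: "exv n iT ?q k1 = e + a" unfolding k1_def using exv_cong[OF n i qn eq1] by simp
  have k1L: "k1 < cnt n iT L ?q" using cnt_iff[OF n] ek1 ea unfolding L_def by simp
  have zk0: "z $ k0 = 0"
  proof -
    have "(pathmat n F j a *\<^sub>v z) $ k1 = 0" using Pz k1L dF by simp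
    moreover have "(pathmat n F j a *\<^sub>v z) $ k1 = z $ k0"
    proof -
      have "(pathmat n F j a *\<^sub>v z) $ k1 = (\<Sum>k2\<in>{0..<cnt n iT L j}. (if exv n iT ?q k1 = exv n iT j k2 + a then 1 else 0) * z $ k2)"
        unfolding F_def Cyc_path[OF n i j] using k1L zc by (simp add: scalar_prod_def)
      also have "\<dots> = (\<Sum>k2\<in>{0..<cnt n iT L j}. if k2 = k0 then z $ k2 else 0)"
        by (rule sum.cong) (auto simp: ek1 ek0[symmetric] exv_inj[OF n])
      also have "\<dots> = z $ k0" using k0L by (simp add: sum.delta')
      finally show ?thesis .
    qed
    ultimately show ?thesis by simp
  qed
  have fj: "f j = g j * (h' j * a' j)"
  proof -
    have gj: "g j \<in> carrier_mat (dimv T j) (dimv F j)" by (rule gc[OF j])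
    have hj: "h' j \<in> carrier_mat (dimv F j) (dimv P j)" using hh j unfolding is_hom_def by auto
    have aj: "a' j \<in> carrier_mat (dimv P j) (dimv S j)" using ha j unfolding is_hom_def by auto
    show ?thesis using fab[OF j] gh[OF j] assoc_mult_mat[OF gj hj aj] by simp
  qed
  have "f j *\<^sub>v s = g j *\<^sub>v z" unfolding fj z_def u_def using gc[OF j] uj[unfolded u_def] s by (simp add: assoc_mult_mat_vec)
  then have gz: "g j *\<^sub>v z = pathmat n T iT e *\<^sub>v yT" using fs by simp
  have Gz: "G j *\<^sub>v z \<in> carrier_vec (cnt n iT b j)" unfolding G_def by (rule mult_mat_vec_carrier[OF shm_carrier zc])
  have G1: "G j \<in> carrier_mat (cnt n iT b j) (cnt n iT L j)" unfolding G_def by simp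
  have "Wm n T iT qT b j *\<^sub>v (g j *\<^sub>v z) = Wm n T iT qT b j *\<^sub>v (Um n T iT yT b j *\<^sub>v (G j *\<^sub>v z))"
    unfolding g_def using assoc_mult_mat_vec[OF U_carrier[OF j] G1 zc] by simp
  also have "\<dots> = (Wm n T iT qT b j * Um n T iT yT b j) *\<^sub>v (G j *\<^sub>v z)"
    by (rule assoc_mult_mat_vec[OF W_carrier[OF j] U_carrier[OF j] Gz, symmetric])
  also have "\<dots> = G j *\<^sub>v z" unfolding WU[OF j] using Gz by simp
  finally have L1: "(Wm n T iT qT b j *\<^sub>v (g j *\<^sub>v z)) $ k0 = z $ k0"
    unfolding G_def shm_mult_vec[OF zc] using k0b k0L by simp
  have "pathmat n T iT e *\<^sub>v yT = col (Um n T iT yT b j) k0" using U_col[OF j k0b] ek0 by simp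
  then have "Wm n T iT qT b j *\<^sub>v (pathmat n T iT e *\<^sub>v yT) = col (Wm n T iT qT b j * Um n T iT yT b j) k0"
    by (simp only:) (rule col_mult2[symmetric, OF W_carrier[OF j] U_carrier[OF j] k0b])
  then have L2: "(Wm n T iT qT b j *\<^sub>v (pathmat n T iT e *\<^sub>v yT)) $ k0 = 1"
    unfolding WU[OF j] using k0b by simp
  show False using L1 L2 gz zk0 by simp
qed


lemma mat_as_lincomb:
  fixes A :: "'a::field mat"
  assumes A: "A \<in> carrier_mat nr nc" and w: "w \<in> carrier_vec nc"
  shows "A *\<^sub>v w \<in> LinearCombinations.module.span class_ring (module_vec TYPE('a) nr) (set (cols A))"
proof -
  interpret vec_space "TYPE('a)" nr .
  have cs: "set (cols A) \<subseteq> carrier_vec nr" using A cols_dim by blast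
  have cd: "\<forall>v\<in>set (cols A). dim_vec v = nr" using A by (auto simp: cols_def)
  have "lincomb_list (\<lambda>k. w $ k) (cols A) = mat_of_cols nr (cols A) *\<^sub>v vec (length (cols A)) (\<lambda>k. w $ k)"
    by (rule lincomb_list_as_mat_mult[OF cd])
  also have "mat_of_cols nr (cols A) = A" using mat_of_cols_cols[of A] A by simp
  also have "vec (length (cols A)) (\<lambda>k. w $ k) = w" using A w by (intro eq_vecI) auto
  finally have "A *\<^sub>v w = lincomb_list (\<lambda>k. w $ k) (cols A)" by simp
  then have "A *\<^sub>v w \<in> span_list (cols A)" unfolding span_list_def by auto
  then show ?thesis using span_list_as_span[OF cs] by simp
qed

lemma span_list_mat:
  fixes A :: "'a::field mat" and v :: "'a vec"
  assumes A: "A \<in> carrier_mat nr nc" and v0: "v \<in> LinearCombinations.module.span class_ring (module_vec TYPE('a) nr) (set (cols A))"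
  shows "\<exists>w \<in> carrier_vec nc. A *\<^sub>v w = v"
proof -
  interpret vec_space "TYPE('a)" nr .
  have cs: "set (cols A) \<subseteq> carrier_vec nr" using A cols_dim by blast
  have v: "v \<in> span_list (cols A)" using v0 span_list_as_span[OF cs] by simp
  have cd: "\<forall>v\<in>set (cols A). dim_vec v = nr" using A by (auto simp: cols_def)
  obtain f where "v = lincomb_list f (cols A)" using v unfolding span_list_def by auto
  also have "\<dots> = mat_of_cols nr (cols A) *\<^sub>v vec (length (cols A)) f" by (rule lincomb_list_as_mat_mult[OF cd])
  also have "mat_of_cols nr (cols A) = A" using mat_of_cols_cols[of A] A by simp
  finally show ?thesis using A by (intro bexI[of _ "vec (length (cols A)) f"]) auto
qed

lemma surj_rank:
  fixes A :: "'a::field mat"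
  assumes A: "A \<in> carrier_mat nr nc" and surj: "\<And>v::'a vec. v \<in> carrier_vec nr \<Longrightarrow> \<exists>w \<in> carrier_vec nc. A *\<^sub>v w = v"
  shows "vec_space.rank nr A = nr"
proof -
  interpret vec_space "TYPE('a)" nr .
  have cs: "set (cols A) \<subseteq> carrier_vec nr" using A cols_dim by blast
  have "span (set (cols A)) = carrier_vec nr"
  proof
    show "span (set (cols A)) \<subseteq> carrier_vec nr" using span_closed[OF cs] by blast
    show "carrier_vec nr \<subseteq> span (set (cols A))"
    proof
      fix v :: "'a vec" assume "v \<in> carrier_vec nr"
      then obtain w where w: "w \<in> carrier_vec nc" "A *\<^sub>v w = v" using surj by blast
      then show "v \<in> span (set (cols A))" using mat_as_lincomb[OF A w(1)] by simp
    qed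
  qed
  then have "span_vs (set (cols A)) = V" by simp
  then show ?thesis unfolding rank_def using dim_is_n by simp
qed

lemma rank_ge_surj:
  fixes A :: "'a::field mat" and v :: "'a vec"
  assumes A: "A \<in> carrier_mat nr nc" and r: "nr \<le> vec_space.rank nr A" and v: "v \<in> carrier_vec nr"
  shows "\<exists>w \<in> carrier_vec nc. A *\<^sub>v w = v"
proof -
  interpret vec_space "TYPE('a)" nr .
  have cs: "set (cols A) \<subseteq> carrier_vec nr" using A cols_dim by blast
  obtain S where S: "maximal S (\<lambda>T. T \<subseteq> set (cols A) \<and> lin_indpt T)"
    using maximal_exists[of "(\<lambda>T. T \<subseteq> set (cols A) \<and> lin_indpt T)" "card (set (cols A))" "{}"]
    by (meson List.finite_set card_mono empty_iff empty_subsetI finite_lin_indpt2 rev_finite_subset)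
  have rk: "rank A = card S" by (rule rank_card_indpt[OF A S])
  have Ss: "S \<subseteq> set (cols A)" "lin_indpt S" using S unfolding maximal_def by auto
  have fS: "finite S" using Ss(1) finite_subset by blast
  have "basis S" by (rule dim_li_is_basis) (use fS Ss cs r rk dim_is_n in auto)
  then have "span S = carrier_vec nr" unfolding basis_def by simp
  moreover have "span S \<subseteq> span (set (cols A))" by (rule span_is_monotone[OF Ss(1)])
  ultimately have "v \<in> span (set (cols A))" using v by blast
  then show ?thesis by (rule span_list_mat[OF A])
qed

lemma rank_le_nr:
  fixes A :: "'a::field mat"
  assumes A: "A \<in> carrier_mat nr nc"
  shows "vec_space.rank nr A \<le> nr"
proof -
  interpret vec_space "TYPE('a)" nr .
  have cs: "set (cols A) \<subseteq> carrier_vec nr" using A cols_dim by blast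
  obtain S where S: "maximal S (\<lambda>T. T \<subseteq> set (cols A) \<and> lin_indpt T)"
    using maximal_exists[of "(\<lambda>T. T \<subseteq> set (cols A) \<and> lin_indpt T)" "card (set (cols A))" "{}"]
    by (meson List.finite_set card_mono empty_iff empty_subsetI finite_lin_indpt2 rev_finite_subset)
  have rk: "rank A = card S" by (rule rank_card_indpt[OF A S])
  have Ss: "S \<subseteq> set (cols A)" "lin_indpt S" using S unfolding maximal_def by auto
  have "card S \<le> dim" by (rule li_le_dim(2)) (use Ss cs in auto)
  then show ?thesis using rk dim_is_n by simp
qed

lemma inj_rank:
  fixes A :: "'a::field mat"
  assumes A: "A \<in> carrier_mat nr nc"
  shows "vec_space.rank nr A = nc \<longleftrightarrow> (\<forall>v \<in> carrier_vec nc. A *\<^sub>v v = 0\<^sub>v nr \<longrightarrow> v = 0\<^sub>v nc)"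
proof -
  interpret vec_space "TYPE('a)" nr .
  show ?thesis
  proof
    assume rk: "rank A = nc"
    have dist: "distinct (cols A)"
    proof (rule ccontr)
      assume nd: "\<not> distinct (cols A)"
      obtain S where S: "maximal S (\<lambda>T. T \<subseteq> set (cols A) \<and> lin_indpt T)"
        using maximal_exists[of "(\<lambda>T. T \<subseteq> set (cols A) \<and> lin_indpt T)" "card (set (cols A))" "{}"]
        by (meson List.finite_set card_mono empty_iff empty_subsetI finite_lin_indpt2 rev_finite_subset)
      have "card S \<le> card (set (cols A))" using S unfolding maximal_def by (simp add: card_mono)
      also have "\<dots> < length (cols A)" using nd card_distinct card_length le_neq_implies_less by blast
      finally have "card S < nc" using A by simp
      then show False using rank_card_indpt[OF A S] rk by simp
    qed
    have li: "lin_indpt (set (cols A))" using full_rank_lin_indpt[OF A rk dist] .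
    show "\<forall>v \<in> carrier_vec nc. A *\<^sub>v v = 0\<^sub>v nr \<longrightarrow> v = 0\<^sub>v nc"
      using lin_depI[OF A _ _ _ dist] li by blast
  next
    assume inj: "\<forall>v \<in> carrier_vec nc. A *\<^sub>v v = 0\<^sub>v nr \<longrightarrow> v = 0\<^sub>v nc"
    have dist: "distinct (cols A)"
    proof (rule ccontr)
      assume "\<not> distinct (cols A)"
      then obtain p q where pq: "p \<noteq> q" "p < length (cols A)" "q < length (cols A)" "cols A ! p = cols A ! q"
        using distinct_conv_nth by blast
      then have pq': "p < nc" "q < nc" "col A p = col A q" using A by auto
      define v where "v = (unit_vec nc p - unit_vec nc q :: 'a vec)"
      have vc: "v \<in> carrier_vec nc" unfolding v_def by simp
      have "A *\<^sub>v v = A *\<^sub>v unit_vec nc p - A *\<^sub>v unit_vec nc q" unfolding v_def using A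
        by (simp add: mult_minus_distrib_mat_vec)
      also have "\<dots> = 0\<^sub>v nr"
      proof -
        have cq: "col A q \<in> carrier_vec nr" using A unfolding carrier_vec_def by simp
        show ?thesis using mat_vec_unit[OF A pq'(1)] mat_vec_unit[OF A pq'(2)] pq'(3) minus_cancel_vec[OF cq] by simp
      qed
      finally have "v = 0\<^sub>v nc" using inj vc by blast
      then have "v $ p = 0" using pq'(1) by simp
      moreover have "v $ p = 1" unfolding v_def using pq pq' by simp
      ultimately show False by simp
    qed
    have "lin_indpt (set (cols A))"
    proof
      assume "lin_dep (set (cols A))"
      then obtain v where "v \<in> carrier_vec nc" "v \<noteq> 0\<^sub>v nc" "A *\<^sub>v v = 0\<^sub>v nr" using lin_depE[OF A _ dist] by blast
      then show False using inj by blast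
    qed
    then show "rank A = nc" using lin_indpt_full_rank[OF A dist] by simp
  qed
qed

lemma inj_le:
  fixes A :: "'a::field mat"
  assumes A: "A \<in> carrier_mat p q" and inj: "\<forall>v \<in> carrier_vec q. A *\<^sub>v v = 0\<^sub>v p \<longrightarrow> v = 0\<^sub>v q"
  shows "q \<le> p"
  using inj_rank[OF A] inj rank_le_nr[OF A] by simp

lemma inv_dims:
  fixes A :: "'a::field mat"
  assumes A: "A \<in> carrier_mat p q" and B: "B \<in> carrier_mat q p" and BA: "B * A = 1\<^sub>m q" and AB: "A * B = 1\<^sub>m p"
  shows "p = q"
proof -
  have "\<forall>v \<in> carrier_vec q. A *\<^sub>v v = 0\<^sub>v p \<longrightarrow> v = 0\<^sub>v q"
  proof (intro ballI impI)
    fix v assume v: "v \<in> carrier_vec q" "A *\<^sub>v v = 0\<^sub>v p"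
    have "v = (B * A) *\<^sub>v v" using BA v by simp
    also have "\<dots> = B *\<^sub>v (A *\<^sub>v v)" using A B v by (simp add: assoc_mult_mat_vec)
    finally show "v = 0\<^sub>v q" using v B by simp
  qed
  moreover have "\<forall>v \<in> carrier_vec p. B *\<^sub>v v = 0\<^sub>v q \<longrightarrow> v = 0\<^sub>v p"
  proof (intro ballI impI)
    fix v assume v: "v \<in> carrier_vec p" "B *\<^sub>v v = 0\<^sub>v q"
    have "v = (A * B) *\<^sub>v v" using AB v by simp
    also have "\<dots> = A *\<^sub>v (B *\<^sub>v v)" using A B v by (simp add: assoc_mult_mat_vec)
    finally show "v = 0\<^sub>v p" using v A by simp
  qed
  ultimately show ?thesis using inj_le[OF A] inj_le[OF B] by simp
qed


lemma top_fst: "fst (top_rep n M) j = dimv M j - vec_space.rank (dimv M j) (arr M (prv n j))"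
  unfolding top_rep_def Let_def by simp
lemma soc_fst: "fst (soc_rep n M) j = dimv M j - vec_space.rank (dimv M (nxt n j)) (arr M j)"
  unfolding soc_rep_def Let_def by simp

lemma prv_lt: "1 \<le> n \<Longrightarrow> prv n j < n" unfolding prv_def by simp
lemma nxt_prv: assumes "1 \<le> n" "j < n" shows "nxt n (prv n j) = j"
proof -
  have "nxt n (prv n j) = Suc ((j + n - 1) mod n) mod n" unfolding nxt_def prv_def by simp
  also have "\<dots> = Suc (j + n - 1) mod n" by (simp add: mod_Suc_eq)
  also have "Suc (j + n - 1) = j + n" using assms by simp
  finally show ?thesis using assms by simp
qed

lemma iso_dims:
  assumes "rep_iso n A B" "j < n"
  shows "dimv A j = dimv B j"
proof -
  obtain f g where "is_hom n A B f" "is_hom n B A g" "\<forall>i<n. g i * f i = 1\<^sub>m (dimv A i) \<and> f i * g i = 1\<^sub>m (dimv B i)"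
    using assms(1) unfolding rep_iso_def by blast
  then show ?thesis using inv_dims[of "f j" "dimv B j" "dimv A j" "g j"] assms(2) unfolding is_hom_def by auto
qed

context cdat
begin

lemma top_other: assumes j: "j < n" "j \<noteq> i" shows "fst (top_rep n M) j = 0"
proof -
  let ?p = "prv n j"
  have p: "?p < n" using prv_lt n by simp
  have np: "nxt n ?p = j" using nxt_prv n j by simp
  have A: "arr M ?p \<in> carrier_mat (dimv M j) (dimv M ?p)" using rep_arr[OF rep p] np by simp
  have dl0: "dl n i ?p = 0" unfolding dl_def using np j by simp
  have surj: "\<exists>w \<in> carrier_vec (dimv M ?p). arr M ?p *\<^sub>v w = z" if z: "z \<in> carrier_vec (dimv M j)" for z
  proof -
    define y where "y = Wm n M i q a j *\<^sub>v z"
    have yc: "y \<in> carrier_vec (cnt n i a j)" unfolding y_def using W_carrier[OF j(1)] z by simp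
    define y' where "y' = vec (cnt n i a ?p) (\<lambda>k. if k < cnt n i a j then y $ k else 0)"
    have y'c: "y' \<in> carrier_vec (cnt n i a ?p)" unfolding y'_def by simp
    have sub: "k < cnt n i a ?p" if "k < cnt n i a j" for k
    proof -
      have "exv n i j k < a" using cnt_iff[OF n] that by simp
      moreover have "exv n i j k = exv n i ?p k + 1" using exv_shift[OF n i p, of k k] dl0 np by simp
      ultimately show ?thesis using cnt_iff[OF n] by simp
    qed
    have Cy: "Cm n i a ?p *\<^sub>v y' = y"
      unfolding Cm_def dl0 np shm_mult_vec[OF y'c] using yc sub unfolding y'_def by (intro eq_vecI) auto
    define w where "w = Um n M i x a ?p *\<^sub>v y'"
    have wc: "w \<in> carrier_vec (dimv M ?p)" unfolding w_def using U_carrier[OF p] y'c by simp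
    have "arr M ?p *\<^sub>v w = (arr M ?p * Um n M i x a ?p) *\<^sub>v y'" unfolding w_def
      using A U_carrier[OF p] y'c by (simp add: assoc_mult_mat_vec)
    also have "\<dots> = (Um n M i x a j * Cm n i a ?p) *\<^sub>v y'" using AU[OF p] np by simp
    also have "\<dots> = Um n M i x a j *\<^sub>v y"
    proof -
      have Cp: "Cm n i a ?p \<in> carrier_mat (cnt n i a j) (cnt n i a ?p)" using Cm_carrier[of n i a ?p] np by simp
      show ?thesis using assoc_mult_mat_vec[OF U_carrier[OF j(1)] Cp y'c] Cy by simp
    qed
    also have "\<dots> = (Um n M i x a j * Wm n M i q a j) *\<^sub>v z" unfolding y_def
      using U_carrier[OF j(1)] W_carrier[OF j(1)] z by (simp add: assoc_mult_mat_vec)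
    also have "\<dots> = z" unfolding full[OF j(1)] using z by simp
    finally show ?thesis using wc by blast
  qed
  have "vec_space.rank (dimv M j) (arr M ?p) = dimv M j" by (rule surj_rank[OF A surj])
  then show ?thesis unfolding top_fst by simp
qed

lemma x_nonzero: "pathmat n M i t *\<^sub>v x \<noteq> 0\<^sub>v (dimv M ((i+t) mod n))"
  using q1 q by auto

lemma top_self: "0 < fst (top_rep n M) i"
proof -
  let ?p = "prv n i"
  have p: "?p < n" using prv_lt n by simp
  have np: "nxt n ?p = i" using nxt_prv n i by simp
  have A: "arr M ?p \<in> carrier_mat (dimv M i) (dimv M ?p)" using rep_arr[OF rep p] np by simp
  have "\<not> dimv M i \<le> vec_space.rank (dimv M i) (arr M ?p)"
  proof
    assume "dimv M i \<le> vec_space.rank (dimv M i) (arr M ?p)"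
    then obtain w where w: "w \<in> carrier_vec (dimv M ?p)" "arr M ?p *\<^sub>v w = x" using rank_ge_surj[OF A _ x] by blast
    have idx: "(?p + 1) mod n = i" using np unfolding nxt_def by simp
    have "pathmat n M ?p (1 + t) *\<^sub>v w = pathmat n M i t *\<^sub>v (pathmat n M ?p 1 *\<^sub>v w)"
      using act_comp[OF rep n p w(1) idx[symmetric], of t] by (simp add: add.commute)
    also have "pathmat n M ?p 1 *\<^sub>v w = x" using pathmat_one[OF rep n p] w by simp
    finally have "pathmat n M ?p (Suc t) *\<^sub>v w = pathmat n M i t *\<^sub>v x" by simp
    moreover have "pathmat n M ?p (Suc t) *\<^sub>v w = 0\<^sub>v (dimv M ((?p + Suc t) mod n))"
      using act_high[OF rep n p w(1) ml, of "Suc t"] at by simp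
    moreover have "(?p + Suc t) mod n = (i + t) mod n"
    proof -
      have "(?p + Suc t) mod n = ((?p + 1) mod n + t) mod n" by (simp add: mod_add_left_eq)
      then show ?thesis using idx by simp
    qed
    ultimately show False using x_nonzero by simp
  qed
  then show ?thesis unfolding top_fst by simp
qed

lemma soc_other: assumes j: "j < n" "j \<noteq> (i + t) mod n" shows "fst (soc_rep n M) j = 0"
proof -
  have nj: "nxt n j < n" using nxt_lt n by simp
  have A: "arr M j \<in> carrier_mat (dimv M (nxt n j)) (dimv M j)" using rep_arr[OF rep j(1)] .
  have inj: "\<forall>z \<in> carrier_vec (dimv M j). arr M j *\<^sub>v z = 0\<^sub>v (dimv M (nxt n j)) \<longrightarrow> z = 0\<^sub>v (dimv M j)"
  proof (intro ballI impI)
    fix z assume z: "z \<in> carrier_vec (dimv M j)" and Az: "arr M j *\<^sub>v z = 0\<^sub>v (dimv M (nxt n j))"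
    define y where "y = Wm n M i q a j *\<^sub>v z"
    have yc: "y \<in> carrier_vec (cnt n i a j)" unfolding y_def using W_carrier[OF j(1)] z by simp
    have zU: "z = Um n M i x a j *\<^sub>v y" unfolding y_def
      using U_carrier[OF j(1)] W_carrier[OF j(1)] z full[OF j(1)] by (simp add: assoc_mult_mat_vec[symmetric])
    have Cyc: "Cm n i a j *\<^sub>v y \<in> carrier_vec (cnt n i a (nxt n j))" by (rule mult_mat_vec_carrier[OF Cm_carrier yc])
    have "Um n M i x a (nxt n j) *\<^sub>v (Cm n i a j *\<^sub>v y) = 0\<^sub>v (dimv M (nxt n j))"
    proof -
      have "Um n M i x a (nxt n j) *\<^sub>v (Cm n i a j *\<^sub>v y) = (arr M j * Um n M i x a j) *\<^sub>v y"
        unfolding AU[OF j(1)] using assoc_mult_mat_vec[OF U_carrier[OF nj] Cm_carrier yc] by simp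
      also have "\<dots> = arr M j *\<^sub>v z" unfolding zU using A U_carrier[OF j(1)] yc by (simp add: assoc_mult_mat_vec)
      finally show ?thesis using Az by simp
    qed
    then have "(Wm n M i q a (nxt n j) * Um n M i x a (nxt n j)) *\<^sub>v (Cm n i a j *\<^sub>v y) = 0\<^sub>v (cnt n i a (nxt n j))"
      using W_carrier[OF nj] U_carrier[OF nj] Cyc by (simp add: assoc_mult_mat_vec)
    then have C0: "Cm n i a j *\<^sub>v y = 0\<^sub>v (cnt n i a (nxt n j))" unfolding WU[OF nj] using Cyc by simp
    have yk: "y $ k = 0" if k: "k < cnt n i a j" for k
    proof -
      have "exv n i j k \<noteq> t"
      proof
        assume "exv n i j k = t"
        then have "(i + t) mod n = j" using exv_mod[OF n i j(1)] by metis
        then show False using j by simp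
      qed
      then have "exv n i j k + 1 < a" using cnt_iff[OF n] k at by simp
      then have kd: "k + dl n i j < cnt n i a (nxt n j)" using cnt_nxt[OF n i j(1)] by simp
      have "(Cm n i a j *\<^sub>v y) $ (k + dl n i j) = y $ k"
        unfolding Cm_def shm_mult_vec[OF yc] using kd k by simp
      then show "y $ k = 0" using C0 kd k by simp
    qed
    have "y = 0\<^sub>v (cnt n i a j)" using yc yk by (intro eq_vecI) auto
    then show "z = 0\<^sub>v (dimv M j)" using zU U_carrier[OF j(1)] by simp
  qed
  have "vec_space.rank (dimv M (nxt n j)) (arr M j) = dimv M j" using inj_rank[OF A] inj by simp
  then show ?thesis unfolding soc_fst by simp
qed

lemma soc_self: "0 < fst (soc_rep n M) ((i + t) mod n)"
proof -
  let ?v = "(i + t) mod n"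
  have v: "?v < n" using n by simp
  have A: "arr M ?v \<in> carrier_mat (dimv M (nxt n ?v)) (dimv M ?v)" using rep_arr[OF rep v] .
  have wc: "pathmat n M i t *\<^sub>v x \<in> carrier_vec (dimv M ?v)" using act_carrier[OF rep n i x] by simp
  have "arr M ?v *\<^sub>v (pathmat n M i t *\<^sub>v x) = pathmat n M i (Suc t) *\<^sub>v x" by (rule arr_act[OF rep n i x]) simp
  also have "\<dots> = 0\<^sub>v (dimv M (nxt n ?v))" using xa at nxt_mod[OF n, of i t] by simp
  finally have "vec_space.rank (dimv M (nxt n ?v)) (arr M ?v) \<noteq> dimv M ?v"
    using inj_rank[OF A] wc x_nonzero by blast
  moreover have "vec_space.rank (dimv M (nxt n ?v)) (arr M ?v) \<le> dimv M ?v"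
    using vec_space.rank_le_nc[OF A] .
  ultimately show ?thesis unfolding soc_fst by simp
qed

end


lemma cdat_of:
  fixes M :: "'k::field rep"
  assumes "indecomposable n l M" "1 \<le> n"
  obtains i x t q where "cdat n l M i x (Suc t) q t"
proof -
  obtain i x t q where w: "wdat n l M i x (Suc t) q t" and f: "\<forall>j<n. Um n M i x (Suc t) j * Wm n M i q (Suc t) j = 1\<^sub>m (dimv M j)"
    using structure_thm[OF assms] by blast
  have "cdat n l M i x (Suc t) q t" unfolding cdat_def cdat_axioms_def using w f by blast
  then show ?thesis using that by blast
qed

lemma len_lt:
  fixes M :: "'k::field rep"
  assumes cd: "cdat n l M i x (Suc t) q t" and np: "\<not> is_projective n l M"
  shows "t < l"
proof -
  interpret cdat n l M i x "Suc t" q t by (rule cd)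
  have "t \<le> l"
  proof (rule ccontr)
    assume "\<not> t \<le> l"
    then have "pathmat n M i t = 0\<^sub>m (dimv M ((i + t) mod n)) (dimv M i)" using pathmat_zero[OF rep n i, of t] by simp
    then show False using x_nonzero x by simp
  qed
  moreover have "t \<noteq> l" using full_projective[of n l M i x q] cd np by auto
  ultimately show ?thesis by simp
qed

lemma top_aux:
  fixes M N :: "'k::field rep"
  assumes cM: "cdat n l M i x (Suc a) qM a" and cN: "cdat n l N i y (Suc b) qN b"
    and ab: "a \<le> b" and bl: "b < l" and st: "stable_hom_zero n l N M"
  shows False
proof -
  interpret M: cdat n l M i x "Suc a" qM a by (rule cM)
  interpret N: cdat n l N i y "Suc b" qN b by (rule cN)
  let ?f = "\<lambda>j. Um n M i x (Suc a) j * shm (cnt n i (Suc a) j) (cnt n i (Suc b) j) 0 * Wm n N i qN (Suc b) j"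
  have ud: "udat n l M i x (Suc a)" by (rule M.udat_axioms)
  have ab': "Suc a \<le> Suc b" using ab by simp
  have a1: "1 \<le> Suc a" by simp
  have fh: "is_hom n N M ?f" and fy: "?f i *\<^sub>v y = x" using hmap[OF N.wdat_axioms ud ab' a1] by auto
  have fp: "factors_through_projective n l N M ?f" using st fh unfolding stable_hom_zero_def by blast
  show False
  proof (rule key[OF cM N.rep fh fp M.i N.x N.xa])
    show "?f i *\<^sub>v y = pathmat n M i 0 *\<^sub>v x" using fy M.x by simp
  qed (use M.i bl in auto)
qed

lemma soc_aux:
  fixes M N :: "'k::field rep"
  assumes cM: "cdat n l M iM x (Suc a) qM a" and cN: "cdat n l N iN y (Suc b) qN b"
    and ab: "a \<le> b" and bl: "b < l" and vv: "(iM + a) mod n = (iN + b) mod n" and st: "stable_hom_zero n l M N"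
  shows False
proof -
  interpret M: cdat n l M iM x "Suc a" qM a by (rule cM)
  interpret N: cdat n l N iN y "Suc b" qN b by (rule cN)
  have n: "1 \<le> n" by (rule M.n)
  define e where "e = b - a"
  define x' where "x' = pathmat n N iN e *\<^sub>v y"
  have ve: "(iN + e) mod n = iM"
  proof -
    have r: "(iN + e) mod n < n" using n by simp
    have "(a + (iN + e) mod n) mod n = (a + (iN + e)) mod n" by (simp add: mod_add_right_eq)
    also have "a + (iN + e) = iN + b" unfolding e_def using ab by simp
    also have "(iN + b) mod n = (a + iM) mod n" using vv by (simp add: add.commute)
    finally show ?thesis using mod_cancel_lt[OF r M.i] by simp
  qed
  have x'c: "x' \<in> carrier_vec (dimv N iM)" unfolding x'_def using act_carrier[OF N.rep n N.i N.x, of e] ve by simp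
  have x'a: "pathmat n N iM (Suc a) *\<^sub>v x' = 0\<^sub>v (dimv N ((iM + Suc a) mod n))"
  proof -
    have "pathmat n N iM (Suc a) *\<^sub>v x' = pathmat n N iN (e + Suc a) *\<^sub>v y"
      unfolding x'_def by (rule act_comp[OF N.rep n N.i N.x ve[symmetric]])
    also have "e + Suc a = Suc b" unfolding e_def using ab by simp
    also have "pathmat n N iN (Suc b) *\<^sub>v y = 0\<^sub>v (dimv N ((iN + Suc b) mod n))" by (rule N.xa)
    also have "(iN + Suc b) mod n = (iM + Suc a) mod n" using vv by (metis add_Suc_right mod_Suc_eq)
    finally show ?thesis .
  qed
  have ud: "udat n l N iM x' (Suc a)" by unfold_locales (use N.rep n M.i x'c x'a in auto)
  let ?f = "\<lambda>j. Um n N iM x' (Suc a) j * shm (cnt n iM (Suc a) j) (cnt n iM (Suc a) j) 0 * Wm n M iM qM (Suc a) j"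
  have fh: "is_hom n M N ?f" and fx: "?f iM *\<^sub>v x = x'" using hmap[OF M.wdat_axioms ud le_refl[of "Suc a"]] by auto
  have fp: "factors_through_projective n l M N ?f" using st fh unfolding stable_hom_zero_def by blast
  show False
  proof (rule key[OF cN M.rep fh fp M.i M.x M.xa])
    show "?f iM *\<^sub>v x = pathmat n N iN e *\<^sub>v y" using fx unfolding x'_def .
  qed (use ve bl ab e_def in auto)
qed

theorem lemma2p9:
  fixes n l :: nat and M N :: "'k::alg_closed_field rep"
  assumes "1 \<le> n"
    and "indecomposable n l M" and "indecomposable n l N"
    and "\<not> is_projective n l M" and "\<not> is_projective n l N"
    and "stable_hom_zero n l M N" and "stable_hom_zero n l N M"
  shows "\<not> rep_iso n (top_rep n M) (top_rep n N) \<and> \<not> rep_iso n (soc_rep n M) (soc_rep n N)"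
proof -
  obtain iM x a qM where cM: "cdat n l M iM x (Suc a) qM a" using cdat_of[OF assms(2,1)] by blast
  obtain iN y b qN where cN: "cdat n l N iN y (Suc b) qN b" using cdat_of[OF assms(3,1)] by blast
  interpret M: cdat n l M iM x "Suc a" qM a by (rule cM)
  interpret N: cdat n l N iN y "Suc b" qN b by (rule cN)
  have al: "a < l" by (rule len_lt[OF cM assms(4)])
  have bl: "b < l" by (rule len_lt[OF cN assms(5)])
  have top: "\<not> rep_iso n (top_rep n M) (top_rep n N)"
  proof
    assume iso: "rep_iso n (top_rep n M) (top_rep n N)"
    have eq: "\<And>j. j < n \<Longrightarrow> fst (top_rep n M) j = fst (top_rep n N) j" using iso_dims[OF iso] by simp
    have "iM = iN"
    proof (rule ccontr)
      assume "iM \<noteq> iN"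
      then have "fst (top_rep n N) iM = 0" using N.top_other[OF M.i] by simp
      then show False using M.top_self eq[OF M.i] by simp
    qed
    then have cN': "cdat n l N iM y (Suc b) qN b" using cN by simp
    show False
    proof (cases "a \<le> b")
      case True
      show False by (rule top_aux[OF cM cN' True bl assms(7)])
    next
      case False
      then have "b \<le> a" by simp
      show False by (rule top_aux[OF cN' cM \<open>b \<le> a\<close> al assms(6)])
    qed
  qed
  have soc: "\<not> rep_iso n (soc_rep n M) (soc_rep n N)"
  proof
    assume iso: "rep_iso n (soc_rep n M) (soc_rep n N)"
    have eq: "\<And>j. j < n \<Longrightarrow> fst (soc_rep n M) j = fst (soc_rep n N) j" using iso_dims[OF iso] by simp
    have vM: "(iM + a) mod n < n" using assms(1) by simp
    have vv: "(iM + a) mod n = (iN + b) mod n"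
    proof (rule ccontr)
      assume "(iM + a) mod n \<noteq> (iN + b) mod n"
      then have "fst (soc_rep n N) ((iM + a) mod n) = 0" using N.soc_other[OF vM] by simp
      then show False using M.soc_self eq[OF vM] by simp
    qed
    show False
    proof (cases "a \<le> b")
      case True
      show False by (rule soc_aux[OF cM cN True bl vv assms(6)])
    next
      case False
      then have "b \<le> a" by simp
      show False by (rule soc_aux[OF cN cM \<open>b \<le> a\<close> al vv[symmetric] assms(7)])
    qed
  qed
  show ?thesis using top soc by blast
qed


end
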